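(* For any projection algebra $P$ there is a unique (up to isomorphism) projection-generated fundamental DRC-semigroup with projection algebra (isomorphic to) $P$, namely $\mathbb M(P)\cong\mathbb F(P)/\mu_{\mathbb F(P)}$.
   Context: Maps are written on the right and composed left to right. A projection algebra is a set $P$ with maps $\theta_p,\delta_p:P\to P$ ($p\in P$) such that for all $p,q$: $p\theta_p=p$, $p\delta_p=p$; $p\theta_{q\theta_p}=q\theta_p$, $p\delta_{q\delta_p}=q\delta_p$; $\theta_q\theta_{q\theta_p}=\theta_q\theta_p$, $\delta_q\delta_{q\delta_p}=\delta_q\delta_p$; $\theta_p\delta_p=\theta_p$, $\delta_p\theta_p=\delta_p$; $\theta_{p\delta_q}\theta_p=\theta_q\theta_p$, $\delta_{p\theta_q}\delta_p=\delta_q\delta_p$. Write $p\,\mathscr F\,q$ iff $p=q\delta_p$ and $q=p\theta_q$. A DRC-semigroup is $(S,\cdot,D,R)$, $(S,\cdot)$ a semigroup, $D,R:S\to S$ with, for all $a,b$: $D(a)a=a$, $aR(a)=a$; $D(ab)=D(aD(b))$, $R(ab)=R(R(a)b)$; $D(ab)=D(a)D(ab)D(a)$, $R(ab)=R(b)R(ab)R(b)$; $R(D(a))=D(a)$, $D(R(a))=R(a)$. Its projections $\mathbf P(S)=\{D(a):a\in S\}$ form a projection algebra with $q\theta_p=R(qp)$, $q\delta_p=D(pq)$; $S$ is projection-generated if generated as a semigroup by $\mathbf P(S)$. A congruence on $S$ is a semigroup congruence $\sigma$ with $a\,\sigma\,b\Rightarrow D(a)\,\sigma\,D(b)$ and $R(a)\,\sigma\,R(b)$;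 it is projection-separating if $p\,\sigma\,q\Rightarrow p=q$ for projections. $\mu_S$ denotes the maximum projection-separating congruence, and $S$ is fundamental if $\mu_S$ is equality. $\mathbb F(P)$ is the semigroup presented by generators $x_p$ ($p\in P$) and relations $x_p^2=x_p$, $x_px_q=x_px_{p\theta_q}$, $x_px_q=x_{q\delta_p}x_q$; every element equals $\overline{x_{p_1}\cdots x_{p_k}}$ for some $p_1\mathscr F\cdots\mathscr F p_k$ (with $p_1,p_k$ determined by the element), and with $D(\overline{x_{p_1}\cdots x_{p_k}})=\overline{x_{p_1}}$, $R(\overline{x_{p_1}\cdots x_{p_k}})=\overline{x_{p_k}}$ it is a DRC-semigroup. $\mathbb M(P)$ is the subsemigroup of $\mathcal T_P\times\mathcal T_P^{\mathrm{op}}$ (product $(\alpha,\alpha')(\beta,\beta')=(\alpha\beta,\beta'\alpha')$, $\mathcal T_P$ the full transformation semigroup on $P$) generated by the pairs $\hat p=(\theta_p,\delta_p)$, $p\in P$, with $D(\hat p_1\cdots\hat p_k)=\hat p_1$, $R(\hat p_1\cdots\hat p_k)=\hat p_k$ whenever $p_1\mathscr F\cdots\mathscr F p_k$. *)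

theory Defs
  imports Main "HOL-Library.FuncSet"
begin

text \<open>A projection algebra is given by a carrier P and two binary operations:
  th p q stands for q theta_p (the map theta_p applied to q, maps written on the right),
  de p q stands for q delta_p. Composition theta_q theta_p (first theta_q, then theta_p)
  applied to x is th p (th q x).\<close>

definition proj_alg :: "'p set \<Rightarrow> ('p \<Rightarrow> 'p \<Rightarrow> 'p) \<Rightarrow> ('p \<Rightarrow> 'p \<Rightarrow> 'p) \<Rightarrow> bool" where
  "proj_alg P th de \<longleftrightarrow>
     (\<forall>p\<in>P. \<forall>q\<in>P. th p q \<in> P \<and> de p q \<in> P) \<and>
     (\<forall>p\<in>P. \<forall>q\<in>P.
        th p p = p \<and> de p p = p \<and>
        th (th p q) p = th p q \<and> de (de p q) p = de p q \<and>
        (\<forall>x\<in>P. th (th p q) (th q x) = th p (th q x)) \<and>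
        (\<forall>x\<in>P. de (de p q) (de q x) = de p (de q x)) \<and>
        (\<forall>x\<in>P. de p (th p x) = th p x) \<and>
        (\<forall>x\<in>P. th p (de p x) = de p x) \<and>
        (\<forall>x\<in>P. th p (th (de q p) x) = th p (th q x)) \<and>
        (\<forall>x\<in>P. de p (de (th q p) x) = de p (de q x)))"

definition fF :: "('p \<Rightarrow> 'p \<Rightarrow> 'p) \<Rightarrow> ('p \<Rightarrow> 'p \<Rightarrow> 'p) \<Rightarrow> 'p \<Rightarrow> 'p \<Rightarrow> bool" where
  "fF th de p q \<longleftrightarrow> p = de p q \<and> q = th q p"

definition fchain :: "'p set \<Rightarrow> ('p \<Rightarrow> 'p \<Rightarrow> 'p) \<Rightarrow> ('p \<Rightarrow> 'p \<Rightarrow> 'p) \<Rightarrow> 'p list \<Rightarrow> bool" where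
  "fchain P th de ps \<longleftrightarrow> ps \<noteq> [] \<and> set ps \<subseteq> P \<and>
     (\<forall>i. Suc i < length ps \<longrightarrow> fF th de (ps ! i) (ps ! Suc i))"

definition proj_alg_iso :: "'p set \<Rightarrow> ('p \<Rightarrow> 'p \<Rightarrow> 'p) \<Rightarrow> ('p \<Rightarrow> 'p \<Rightarrow> 'p)
     \<Rightarrow> 'q set \<Rightarrow> ('q \<Rightarrow> 'q \<Rightarrow> 'q) \<Rightarrow> ('q \<Rightarrow> 'q \<Rightarrow> 'q) \<Rightarrow> ('p \<Rightarrow> 'q) \<Rightarrow> bool" where
  "proj_alg_iso P th de Q th' de' f \<longleftrightarrow> bij_betw f P Q \<and>
     (\<forall>p\<in>P. \<forall>q\<in>P. f (th p q) = th' (f p) (f q) \<and> f (de p q) = de' (f p) (f q))"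

record 'a drc =
  drc_carrier :: "'a set"
  drc_mult :: "'a \<Rightarrow> 'a \<Rightarrow> 'a"
  drc_D :: "'a \<Rightarrow> 'a"
  drc_R :: "'a \<Rightarrow> 'a"

definition drc :: "'a drc \<Rightarrow> bool" where
  "drc S \<longleftrightarrow>
    (let C = drc_carrier S; m = drc_mult S; D = drc_D S; R = drc_R S in
     (\<forall>a\<in>C. \<forall>b\<in>C. m a b \<in> C) \<and> (\<forall>a\<in>C. D a \<in> C \<and> R a \<in> C) \<and>
     (\<forall>a\<in>C. \<forall>b\<in>C. \<forall>c\<in>C. m (m a b) c = m a (m b c)) \<and>
     (\<forall>a\<in>C. m (D a) a = a \<and> m a (R a) = a \<and> R (D a) = D a \<and> D (R a) = R a) \<and>
     (\<forall>a\<in>C. \<forall>b\<in>C.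
        D (m a b) = D (m a (D b)) \<and> R (m a b) = R (m (R a) b) \<and>
        D (m a b) = m (m (D a) (D (m a b))) (D a) \<and>
        R (m a b) = m (m (R b) (R (m a b))) (R b)))"

definition projs :: "'a drc \<Rightarrow> 'a set" where
  "projs S = drc_D S ` drc_carrier S"

definition thS :: "'a drc \<Rightarrow> 'a \<Rightarrow> 'a \<Rightarrow> 'a" where
  "thS S p q = drc_R S (drc_mult S q p)"

definition deS :: "'a drc \<Rightarrow> 'a \<Rightarrow> 'a \<Rightarrow> 'a" where
  "deS S p q = drc_D S (drc_mult S p q)"

inductive_set sgen :: "('a \<Rightarrow> 'a \<Rightarrow> 'a) \<Rightarrow> 'a set \<Rightarrow> 'a set" for m X where
  sgen_base: "x \<in> X \<Longrightarrow> x \<in> sgen m X"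
| sgen_mult: "a \<in> sgen m X \<Longrightarrow> b \<in> sgen m X \<Longrightarrow> m a b \<in> sgen m X"

definition proj_generated :: "'a drc \<Rightarrow> bool" where
  "proj_generated S \<longleftrightarrow> drc_carrier S = sgen (drc_mult S) (projs S)"

definition drc_iso :: "'a drc \<Rightarrow> 'b drc \<Rightarrow> ('a \<Rightarrow> 'b) \<Rightarrow> bool" where
  "drc_iso S T f \<longleftrightarrow> bij_betw f (drc_carrier S) (drc_carrier T) \<and>
     (\<forall>a\<in>drc_carrier S. \<forall>b\<in>drc_carrier S.
        f (drc_mult S a b) = drc_mult T (f a) (f b)) \<and>
     (\<forall>a\<in>drc_carrier S. f (drc_D S a) = drc_D T (f a) \<and> f (drc_R S a) = drc_R T (f a))"

definition drc_cong :: "'a drc \<Rightarrow> ('a \<times> 'a) set \<Rightarrow> bool" where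
  "drc_cong S \<sigma> \<longleftrightarrow> equiv (drc_carrier S) \<sigma> \<and>
     (\<forall>(a, b)\<in>\<sigma>. \<forall>c\<in>drc_carrier S.
        (drc_mult S a c, drc_mult S b c) \<in> \<sigma> \<and> (drc_mult S c a, drc_mult S c b) \<in> \<sigma>) \<and>
     (\<forall>(a, b)\<in>\<sigma>. (drc_D S a, drc_D S b) \<in> \<sigma> \<and> (drc_R S a, drc_R S b) \<in> \<sigma>)"

definition proj_separating :: "'a drc \<Rightarrow> ('a \<times> 'a) set \<Rightarrow> bool" where
  "proj_separating S \<sigma> \<longleftrightarrow> (\<forall>p\<in>projs S. \<forall>q\<in>projs S. (p, q) \<in> \<sigma> \<longrightarrow> p = q)"

definition mu :: "'a drc \<Rightarrow> ('a \<times> 'a) set" where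
  "mu S = (THE \<sigma>. drc_cong S \<sigma> \<and> proj_separating S \<sigma> \<and>
             (\<forall>\<tau>. drc_cong S \<tau> \<and> proj_separating S \<tau> \<longrightarrow> \<tau> \<subseteq> \<sigma>))"

definition fundamental :: "'a drc \<Rightarrow> bool" where
  "fundamental S \<longleftrightarrow> mu S = Id_on (drc_carrier S)"

definition quot :: "'a drc \<Rightarrow> ('a \<times> 'a) set \<Rightarrow> 'a set drc" where
  "quot S \<sigma> = \<lparr> drc_carrier = drc_carrier S // \<sigma>,
     drc_mult = (\<lambda>A B. \<sigma> `` {drc_mult S (SOME a. a \<in> A) (SOME b. b \<in> B)}),
     drc_D = (\<lambda>A. \<sigma> `` {drc_D S (SOME a. a \<in> A)}),
     drc_R = (\<lambda>A. \<sigma> `` {drc_R S (SOME a. a \<in> A)}) \<rparr>"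

text \<open>Words are nonempty lists over P; frel is the congruence generated by the
  defining relations x_p x_p = x_p, x_p x_q = x_p x_(p theta_q), x_p x_q = x_(q delta_p) x_q.\<close>
inductive_set frel :: "'p set \<Rightarrow> ('p \<Rightarrow> 'p \<Rightarrow> 'p) \<Rightarrow> ('p \<Rightarrow> 'p \<Rightarrow> 'p) \<Rightarrow> ('p list \<times> 'p list) set"
  for P th de where
  frel_idem: "p \<in> P \<Longrightarrow> ([p, p], [p]) \<in> frel P th de"
| frel_th: "p \<in> P \<Longrightarrow> q \<in> P \<Longrightarrow> ([p, q], [p, th q p]) \<in> frel P th de"
| frel_de: "p \<in> P \<Longrightarrow> q \<in> P \<Longrightarrow> ([p, q], [de p q, q]) \<in> frel P th de"
| frel_refl: "w \<in> lists P \<Longrightarrow> w \<noteq> [] \<Longrightarrow> (w, w) \<in> frel P th de"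
| frel_sym: "(u, v) \<in> frel P th de \<Longrightarrow> (v, u) \<in> frel P th de"
| frel_trans: "(u, v) \<in> frel P th de \<Longrightarrow> (v, w) \<in> frel P th de \<Longrightarrow> (u, w) \<in> frel P th de"
| frel_ctx: "(u, v) \<in> frel P th de \<Longrightarrow> x \<in> lists P \<Longrightarrow> y \<in> lists P \<Longrightarrow>
     (x @ u @ y, x @ v @ y) \<in> frel P th de"

definition Fdrc :: "'p set \<Rightarrow> ('p \<Rightarrow> 'p \<Rightarrow> 'p) \<Rightarrow> ('p \<Rightarrow> 'p \<Rightarrow> 'p) \<Rightarrow> 'p list set drc" where
  "Fdrc P th de = \<lparr> drc_carrier = (lists P - {[]}) // frel P th de,
     drc_mult = (\<lambda>A B. frel P th de `` {(SOME u. u \<in> A) @ (SOME v. v \<in> B)}),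
     drc_D = (\<lambda>A. frel P th de `` {[hd (SOME w. w \<in> A \<and> fchain P th de w)]}),
     drc_R = (\<lambda>A. frel P th de `` {[last (SOME w. w \<in> A \<and> fchain P th de w)]}) \<rparr>"

text \<open>Transformations of P are represented as functions extensional outside P;
  composition is left to right.\<close>
definition tcomp :: "'p set \<Rightarrow> ('p \<Rightarrow> 'p) \<Rightarrow> ('p \<Rightarrow> 'p) \<Rightarrow> ('p \<Rightarrow> 'p)" where
  "tcomp P \<alpha> \<beta> = (\<lambda>x\<in>P. \<beta> (\<alpha> x))"

definition Mmult :: "'p set \<Rightarrow> ('p \<Rightarrow> 'p) \<times> ('p \<Rightarrow> 'p) \<Rightarrow> ('p \<Rightarrow> 'p) \<times> ('p \<Rightarrow> 'p)
     \<Rightarrow> ('p \<Rightarrow> 'p) \<times> ('p \<Rightarrow> 'p)" where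
  "Mmult P a b = (tcomp P (fst a) (fst b), tcomp P (snd b) (snd a))"

definition hatp :: "'p set \<Rightarrow> ('p \<Rightarrow> 'p \<Rightarrow> 'p) \<Rightarrow> ('p \<Rightarrow> 'p \<Rightarrow> 'p) \<Rightarrow> 'p
     \<Rightarrow> ('p \<Rightarrow> 'p) \<times> ('p \<Rightarrow> 'p)" where
  "hatp P th de p = ((\<lambda>x\<in>P. th p x), (\<lambda>x\<in>P. de p x))"

fun hprod :: "'p set \<Rightarrow> ('p \<Rightarrow> 'p \<Rightarrow> 'p) \<Rightarrow> ('p \<Rightarrow> 'p \<Rightarrow> 'p) \<Rightarrow> 'p list
     \<Rightarrow> ('p \<Rightarrow> 'p) \<times> ('p \<Rightarrow> 'p)" where
  "hprod P th de [] = undefined"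
| "hprod P th de [p] = hatp P th de p"
| "hprod P th de (p # q # ps) = Mmult P (hatp P th de p) (hprod P th de (q # ps))"

definition Mdrc :: "'p set \<Rightarrow> ('p \<Rightarrow> 'p \<Rightarrow> 'p) \<Rightarrow> ('p \<Rightarrow> 'p \<Rightarrow> 'p)
     \<Rightarrow> (('p \<Rightarrow> 'p) \<times> ('p \<Rightarrow> 'p)) drc" where
  "Mdrc P th de = \<lparr> drc_carrier = sgen (Mmult P) (hatp P th de ` P),
     drc_mult = Mmult P,
     drc_D = (\<lambda>a. hatp P th de (hd (SOME ps. fchain P th de ps \<and> hprod P th de ps = a))),
     drc_R = (\<lambda>a. hatp P th de (last (SOME ps. fchain P th de ps \<and> hprod P th de ps = a))) \<rparr>"

end

theory Submission
  imports Defs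
begin

locale pa =
  fixes P :: "'p set" and th de :: "'p \<Rightarrow> 'p \<Rightarrow> 'p"
  assumes pa: "proj_alg P th de"
begin
lemma cl: "p \<in> P \<Longrightarrow> q \<in> P \<Longrightarrow> th p q \<in> P" "p \<in> P \<Longrightarrow> q \<in> P \<Longrightarrow> de p q \<in> P"
  using pa unfolding proj_alg_def by auto
lemma ax: assumes "p \<in> P" "q \<in> P" shows
  "th p p = p" "de p p = p" "th (th p q) p = th p q" "de (de p q) p = de p q"
  "\<And>x. x\<in>P \<Longrightarrow> th (th p q) (th q x) = th p (th q x)"
  "\<And>x. x\<in>P \<Longrightarrow> de (de p q) (de q x) = de p (de q x)"
  "\<And>x. x\<in>P \<Longrightarrow> de p (th p x) = th p x"
  "\<And>x. x\<in>P \<Longrightarrow> th p (de p x) = de p x"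
  "\<And>x. x\<in>P \<Longrightarrow> th p (th (de q p) x) = th p (th q x)"
  "\<And>x. x\<in>P \<Longrightarrow> de p (de (th q p) x) = de p (de q x)"
  using pa assms unfolding proj_alg_def by auto

lemma L1a: assumes "p \<in> P" "q \<in> P" shows "de (de p (th q p)) (th q p) = de p (th q p)"
  by (smt (verit, ccfv_threshold) assms(1,2) ax(3,6) cl(1) pa.ax(7) pa_axioms)
lemma L1b: assumes "p \<in> P" "q \<in> P" shows "th (th q p) (de p (th q p)) = th q p"
  by (smt (verit) assms(1,2) pa.ax(1,3,5,8,9) pa.cl(1,2) pa_axioms)
lemma idth: "p \<in> P \<Longrightarrow> x \<in> P \<Longrightarrow> th p (th p x) = th p x"
  by (metis (full_types) ax(7) cl(1) pa.ax(8) pa_axioms)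
lemma idde: "p \<in> P \<Longrightarrow> x \<in> P \<Longrightarrow> de p (de p x) = de p x"
  by (metis ax(6) cl(2) ax(8) ax(7))
lemma le_th: "a \<in> P \<Longrightarrow> b \<in> P \<Longrightarrow> de b a = a \<longleftrightarrow> th b a = a"
  by (metis ax(8) ax(7))
lemma antisym: "a \<in> P \<Longrightarrow> b \<in> P \<Longrightarrow> de b a = a \<Longrightarrow> de a b = b \<Longrightarrow> a = b"
  by (metis ax(4))
lemma mono_de: "p \<in> P \<Longrightarrow> s \<in> P \<Longrightarrow> r \<in> P \<Longrightarrow> de s r = r \<Longrightarrow> de (de p s) (de p r) = de p r"
  by (smt (verit, ccfv_SIG) ax(6,7,8) cl(2))
lemma mono_th: "p \<in> P \<Longrightarrow> s \<in> P \<Longrightarrow> r \<in> P \<Longrightarrow> th s r = r \<Longrightarrow> th (th p s) (th p r) = th p r"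
  by (smt (verit, ccfv_threshold) ax(5,7,8) cl(1))
lemma h1: "e \<in> P \<Longrightarrow> f \<in> P \<Longrightarrow> y \<in> P \<Longrightarrow> de e f = f \<Longrightarrow> th e (th f y) = th f y"
  by (metis ax(5,7,8) cl(1))
lemma h2: "e \<in> P \<Longrightarrow> f \<in> P \<Longrightarrow> y \<in> P \<Longrightarrow> de e f = f \<Longrightarrow> th f (th e y) = th f y"
  by (smt (verit, ccfv_threshold) ax(7,9) cl(1) pa.ax(8) pa_axioms)
lemma h3: "e \<in> P \<Longrightarrow> f \<in> P \<Longrightarrow> y \<in> P \<Longrightarrow> de e f = f \<Longrightarrow> de e (de f y) = de f y"
  by (smt (verit, del_insts) ax(5) cl(2) pa.ax(7,8) pa_axioms)
lemma h4: "e \<in> P \<Longrightarrow> f \<in> P \<Longrightarrow> y \<in> P \<Longrightarrow> de e f = f \<Longrightarrow> de f (de e y) = de f y"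
  by (metis ax(10,7,8) cl(2))
lemma L3: "t \<in> P \<Longrightarrow> r \<in> P \<Longrightarrow> de r t = t \<Longrightarrow> th t r = t"
  by (metis pa_axioms ax(3) pa.ax(8))
lemma L2: "t \<in> P \<Longrightarrow> r \<in> P \<Longrightarrow> r' \<in> P \<Longrightarrow> r' = de r' r \<Longrightarrow> r = th r r' \<Longrightarrow> de r t = t \<Longrightarrow> th t r' = t"
  by (metis ax(3,7,8,9) cl(1))

abbreviation "FR \<equiv> frel P th de"
abbreviation "fch \<equiv> fchain P th de"

lemma fch1[simp]: "fch [a] \<longleftrightarrow> a \<in> P"
  unfolding fchain_def by auto
lemma fch2[simp]: "fch (a#b#xs) \<longleftrightarrow> a \<in> P \<and> fF th de a b \<and> fch (b#xs)"
proof
  assume h: "fch (a#b#xs)"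
  then have "fF th de a b" unfolding fchain_def by force
  moreover have "fch (b#xs)" unfolding fchain_def
  proof (intro conjI allI impI)
    fix i assume "Suc i < length (b#xs)"
    then have "Suc (Suc i) < length (a#b#xs)" by simp
    then show "fF th de ((b#xs)!i) ((b#xs)!Suc i)" using h unfolding fchain_def by fastforce
  qed (use h in \<open>auto simp: fchain_def\<close>)
  ultimately show "a \<in> P \<and> fF th de a b \<and> fch (b#xs)" using h unfolding fchain_def by auto
next
  assume h: "a \<in> P \<and> fF th de a b \<and> fch (b#xs)"
  show "fch (a#b#xs)" unfolding fchain_def
  proof (intro conjI allI impI)
    fix i assume "Suc i < length (a#b#xs)"
    then show "fF th de ((a#b#xs)!i) ((a#b#xs)!Suc i)" using h unfolding fchain_def
      by (cases i) auto
  qed (use h in \<open>auto simp: fchain_def\<close>)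
qed
lemma fch_snoc: "fch (xs@[a]) \<Longrightarrow> b \<in> P \<Longrightarrow> fF th de a b \<Longrightarrow> fch (xs@[a,b])"
proof (induction xs)
  case Nil then show ?case by auto
next
  case (Cons x xs) then show ?case by (cases xs) auto
qed
lemma fch_P: "fch w \<Longrightarrow> w \<in> lists P \<and> w \<noteq> []"
  unfolding fchain_def by auto
lemma fch_butlast: "fch (xs@[a]) \<Longrightarrow> xs \<noteq> [] \<Longrightarrow> fch xs"
proof (induction xs)
  case Nil then show ?case by auto
next
  case (Cons x xs) then show ?case by (cases xs) auto
qed
lemma fch_last2: "fch (xs@[a,b]) \<Longrightarrow> fF th de a b"
proof (induction xs)
  case Nil then show ?case by auto
next
  case (Cons x xs) then show ?case by (cases xs) auto
qed

lemma fr_idem: "p \<in> P \<Longrightarrow> ([p,p],[p]) \<in> FR" by (rule frel_idem)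
lemma fr_th: "p \<in> P \<Longrightarrow> q \<in> P \<Longrightarrow> ([p,q],[p, th q p]) \<in> FR" by (rule frel_th)
lemma fr_de: "p \<in> P \<Longrightarrow> q \<in> P \<Longrightarrow> ([p,q],[de p q, q]) \<in> FR" by (rule frel_de)
lemma fr_trans: "(u,v) \<in> FR \<Longrightarrow> (v,w) \<in> FR \<Longrightarrow> (u,w) \<in> FR" by (rule frel_trans)
lemma fr_sym: "(u,v) \<in> FR \<Longrightarrow> (v,u) \<in> FR" by (rule frel_sym)
lemma frel_lists: "(u,v) \<in> FR \<Longrightarrow> u \<in> lists P \<and> u \<noteq> [] \<and> v \<in> lists P \<and> v \<noteq> []"
  by (induction rule: frel.induct) (auto intro: cl)
lemma frel_L: "(u,v) \<in> FR \<Longrightarrow> x \<in> lists P \<Longrightarrow> (x@u, x@v) \<in> FR"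
  using frel_ctx[of u v P th de x "[]"] by simp
lemma frel_R: "(u,v) \<in> FR \<Longrightarrow> y \<in> lists P \<Longrightarrow> (u@y, v@y) \<in> FR"
  using frel_ctx[of u v P th de "[]" y] by simp
lemma frel_refl': "w \<in> lists P \<Longrightarrow> w \<noteq> [] \<Longrightarrow> (w,w) \<in> FR"
  by (rule frel_refl)

lemma base_rt: "r \<in> P \<Longrightarrow> t \<in> P \<Longrightarrow> de r t = t \<Longrightarrow> ([r,t],[t]) \<in> FR"
proof -
  assume a: "r \<in> P" "t \<in> P" "de r t = t"
  have "([r,t],[t,t]) \<in> FR" using fr_de[OF a(1,2)] a(3) by simp
  then show ?thesis using fr_idem[OF a(2)] fr_trans by blast
qed

lemma restrict: "fch (v@[r]) \<Longrightarrow> t \<in> P \<Longrightarrow> de r t = t \<Longrightarrow>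
   \<exists>w. fch (w@[t]) \<and> (v@[r,t], w@[t]) \<in> FR"
proof (induction v arbitrary: r t rule: rev_induct)
  case Nil
  then show ?case using base_rt[of r t] by (intro exI[of _ "[]"]) auto
next
  case (snoc r' v2)
  have ch: "fch (v2@[r',r])" using snoc.prems by simp
  have F: "fF th de r' r" using fch_last2[OF ch] .
  have rP: "r \<in> P" and r'P: "r' \<in> P" and v2P: "v2 \<in> lists P" using fch_P[OF ch] by auto
  have th1: "th t r' = t" using L2[of t r r'] F snoc.prems rP r'P unfolding fF_def by auto
  define t' where "t' = de r' t"
  have t'P: "t' \<in> P" unfolding t'_def using cl r'P snoc.prems by auto
  have le: "de r' t' = t'" unfolding t'_def using idde r'P snoc.prems by auto
  have Ft: "fF th de t' t" unfolding fF_def t'_def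
    using L1a[OF r'P \<open>t\<in>P\<close>] L1b[OF r'P \<open>t\<in>P\<close>] th1 by auto
  obtain w' where w': "fch (w'@[t'])" "(v2@[r',t'], w'@[t']) \<in> FR"
    using snoc.IH[of r' t'] ch fch_butlast[of "v2@[r']" r] t'P le by auto
  have w'P: "w' \<in> lists P" using fch_P[OF w'(1)] by auto
  have "((v2@[r'])@[r,t], (v2@[r'])@[t]) \<in> FR"
    using frel_L[OF base_rt[OF rP \<open>t\<in>P\<close> \<open>de r t = t\<close>], of "v2@[r']"] v2P r'P by auto
  moreover have "([r',t],[t',t]) \<in> FR" using fr_de[OF r'P \<open>t\<in>P\<close>] unfolding t'_def .
  then have "(v2@[r',t], v2@[t',t]) \<in> FR" using frel_L v2P by fastforce
  moreover have "([t',t],[r',t',t]) \<in> FR"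
    using frel_R[OF fr_sym[OF base_rt[OF r'P t'P le]], of "[t]"] \<open>t\<in>P\<close> by auto
  then have "(v2@[t',t], v2@[r',t',t]) \<in> FR" using frel_L v2P by fastforce
  moreover have "(v2@[r',t',t], w'@[t',t]) \<in> FR" using frel_R[OF w'(2), of "[t]"] \<open>t\<in>P\<close> by auto
  ultimately have "((v2@[r'])@[r,t], (w'@[t'])@[t]) \<in> FR"
    by simp (meson fr_trans)
  moreover have "fch ((w'@[t'])@[t])" using fch_snoc[OF w'(1) \<open>t\<in>P\<close> Ft] by simp
  ultimately show ?case by (intro exI[of _ "w'@[t']"]) auto
qed

lemma normalize: "w \<in> lists P \<Longrightarrow> w \<noteq> [] \<Longrightarrow> \<exists>v. fch v \<and> (w,v) \<in> FR"
proof (induction w rule: rev_induct)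
  case Nil then show ?case by simp
next
  case (snoc q u)
  show ?case
  proof (cases "u = []")
    case True then show ?thesis using snoc.prems by (intro exI[of _ "[q]"]) (auto intro: frel_refl)
  next
    case False
    then obtain v where v: "fch v" "(u,v) \<in> FR" using snoc by auto
    obtain v1 r where vr: "v = v1@[r]" using fch_P[OF v(1)] by (metis rev_exhaust)
    have qP: "q \<in> P" using snoc.prems by auto
    have rP: "r \<in> P" and v1P: "v1 \<in> lists P" using fch_P[OF v(1)] vr by auto
    define s where "s = th q r"
    define t where "t = de r s"
    have sP: "s \<in> P" and tP: "t \<in> P" unfolding s_def t_def using cl qP rP by auto
    have le: "de r t = t" unfolding t_def using idde rP sP by auto
    have Ft: "fF th de t s" unfolding fF_def t_def s_def using L1a[OF rP qP] L1b[OF rP qP] by auto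
    have "(u@[q], v1@[r,q]) \<in> FR" using frel_R[OF v(2), of "[q]"] vr qP by auto
    moreover have "([r,q],[r,s]) \<in> FR" using fr_th[OF rP qP] unfolding s_def .
    then have "(v1@[r,q], v1@[r,s]) \<in> FR" using frel_L v1P by fastforce
    moreover have "([r,s],[t,s]) \<in> FR" using fr_de[OF rP sP] unfolding t_def .
    then have "(v1@[r,s], v1@[t,s]) \<in> FR" using frel_L v1P by fastforce
    moreover have "([t,s],[r,t,s]) \<in> FR"
      using frel_R[OF fr_sym[OF base_rt[OF rP tP le]], of "[s]"] sP by auto
    then have "(v1@[t,s], v1@[r,t,s]) \<in> FR" using frel_L v1P by fastforce
    moreover obtain w' where w': "fch (w'@[t])" "(v1@[r,t], w'@[t]) \<in> FR"
      using restrict[of v1 r t] v(1) vr tP le by auto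
    then have "(v1@[r,t,s], w'@[t,s]) \<in> FR" using frel_R[OF w'(2), of "[s]"] sP by auto
    ultimately have "(u@[q], w'@[t,s]) \<in> FR" by (meson fr_trans)
    then show ?thesis using fch_snoc[OF w'(1) sP Ft] by blast
  qed
qed

abbreviation "hat \<equiv> hatp P th de"
abbreviation "hp \<equiv> hprod P th de"
abbreviation "MM \<equiv> Mmult P"
abbreviation "MD \<equiv> Mdrc P th de"
abbreviation "CM \<equiv> sgen MM (hat ` P)"
definition okf :: "('p \<Rightarrow> 'p) \<Rightarrow> bool" where "okf f \<longleftrightarrow> f \<in> extensional P \<and> (\<forall>x\<in>P. f x \<in> P)"
definition okM :: "('p \<Rightarrow> 'p) \<times> ('p \<Rightarrow> 'p) \<Rightarrow> bool" where "okM a \<longleftrightarrow> okf (fst a) \<and> okf (snd a)"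
definition lep where "lep r s \<longleftrightarrow> de s r = r"

lemma MM_fst: "fst (MM a b) = (\<lambda>x\<in>P. fst b (fst a x))" unfolding Mmult_def tcomp_def by simp
lemma MM_snd: "snd (MM a b) = (\<lambda>x\<in>P. snd a (snd b x))" unfolding Mmult_def tcomp_def by simp
lemma hat_fst: "fst (hat p) = (\<lambda>x\<in>P. th p x)" unfolding hatp_def by simp
lemma hat_snd: "snd (hat p) = (\<lambda>x\<in>P. de p x)" unfolding hatp_def by simp

lemma okM_hat: "p \<in> P \<Longrightarrow> okM (hat p)"
  unfolding okM_def okf_def hat_fst hat_snd using cl by auto
lemma okM_MM: "okM a \<Longrightarrow> okM b \<Longrightarrow> okM (MM a b)"
  unfolding okM_def okf_def MM_fst MM_snd by auto
lemma okM_eq: "okM a \<Longrightarrow> okM b \<Longrightarrow> (\<And>x. x \<in> P \<Longrightarrow> fst a x = fst b x) \<Longrightarrow> (\<And>x. x \<in> P \<Longrightarrow> snd a x = snd b x) \<Longrightarrow> a = b"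
  unfolding okM_def okf_def by (metis extensionalityI prod_eqI)
lemma MM_assoc: "okM a \<Longrightarrow> okM c \<Longrightarrow> MM (MM a b) c = MM a (MM b c)"
  unfolding Mmult_def tcomp_def okM_def okf_def by (auto intro!: restrict_ext)

lemma hp_Cons: "w \<noteq> [] \<Longrightarrow> hp (a#w) = MM (hat a) (hp w)"
  by (cases w) auto
lemma okM_hp: "w \<in> lists P \<Longrightarrow> w \<noteq> [] \<Longrightarrow> okM (hp w)"
proof (induction w)
  case Nil then show ?case by simp
next
  case (Cons a w) then show ?case by (cases "w = []") (auto simp: hp_Cons okM_hat okM_MM)
qed
lemma hp_append: "u \<in> lists P \<Longrightarrow> u \<noteq> [] \<Longrightarrow> v \<in> lists P \<Longrightarrow> v \<noteq> [] \<Longrightarrow> hp (u@v) = MM (hp u) (hp v)"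
proof (induction u)
  case Nil then show ?case by simp
next
  case (Cons a u)
  show ?case
  proof (cases "u = []")
    case True then show ?thesis using Cons by (simp add: hp_Cons)
  next
    case False
    then have "hp ((a#u)@v) = MM (hat a) (MM (hp u) (hp v))" using Cons by (simp add: hp_Cons)
    also have "\<dots> = MM (MM (hat a) (hp u)) (hp v)" using MM_assoc okM_hat okM_hp Cons by auto
    finally show ?thesis using False by (simp add: hp_Cons)
  qed
qed

lemma hat_idem: "p \<in> P \<Longrightarrow> MM (hat p) (hat p) = hat p"
  by (rule okM_eq) (auto simp: okM_MM okM_hat MM_fst MM_snd hat_fst hat_snd cl idth idde)
lemma hat_th: "p \<in> P \<Longrightarrow> q \<in> P \<Longrightarrow> MM (hat p) (hat q) = MM (hat p) (hat (th q p))"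
  by (rule okM_eq) (auto simp: okM_MM okM_hat MM_fst MM_snd hat_fst hat_snd cl ax)
lemma hat_de: "p \<in> P \<Longrightarrow> q \<in> P \<Longrightarrow> MM (hat p) (hat q) = MM (hat (de p q)) (hat q)"
  by (rule okM_eq) (auto simp: okM_MM okM_hat MM_fst MM_snd hat_fst hat_snd cl ax)

lemma hp_ctx: "hp u = hp v \<Longrightarrow> u \<in> lists P \<Longrightarrow> u \<noteq> [] \<Longrightarrow> v \<in> lists P \<Longrightarrow> v \<noteq> [] \<Longrightarrow>
   x \<in> lists P \<Longrightarrow> y \<in> lists P \<Longrightarrow> hp (x@u@y) = hp (x@v@y)"
proof -
  assume a: "hp u = hp v" "u \<in> lists P" "u \<noteq> []" "v \<in> lists P" "v \<noteq> []" "x \<in> lists P" "y \<in> lists P"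
  have 1: "hp (u@y) = hp (v@y)"
    using a by (cases "y = []") (auto simp: hp_append)
  show ?thesis using a 1 by (cases "x = []") (auto simp: hp_append)
qed

lemma frel_hp: "(u,v) \<in> FR \<Longrightarrow> hp u = hp v"
proof (induction rule: frel.induct)
  case (frel_idem p) then show ?case using hat_idem by simp
next
  case (frel_th p q) then show ?case using hat_th by simp
next
  case (frel_de p q) then show ?case using hat_de by simp
next
  case (frel_ctx u v x y) then show ?case using hp_ctx frel_lists by blast
qed auto

lemma CM_hp: "a \<in> CM \<Longrightarrow> \<exists>w. w \<in> lists P \<and> w \<noteq> [] \<and> a = hp w"
proof (induction rule: sgen.induct)
  case (sgen_base x) then obtain p where "p \<in> P" "x = hat p" by auto
  then show ?case by (intro exI[of _ "[p]"]) auto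
next
  case (sgen_mult a b)
  then obtain u v where "u \<in> lists P" "u \<noteq> []" "a = hp u" "v \<in> lists P" "v \<noteq> []" "b = hp v" by auto
  then show ?case by (intro exI[of _ "u@v"]) (auto simp: hp_append)
qed
lemma hp_CM: "w \<in> lists P \<Longrightarrow> w \<noteq> [] \<Longrightarrow> hp w \<in> CM"
proof (induction w)
  case Nil then show ?case by simp
next
  case (Cons a w) then show ?case by (cases "w = []") (auto simp: hp_Cons intro: sgen.intros)
qed
lemma CM_chain: "a \<in> CM \<Longrightarrow> \<exists>w. fch w \<and> a = hp w"
  using CM_hp normalize frel_hp by metis
lemma okM_CM: "a \<in> CM \<Longrightarrow> okM a"
  using CM_hp okM_hp by blast

end

context pa begin
lemma last_P: "w \<in> lists P \<Longrightarrow> w \<noteq> [] \<Longrightarrow> last w \<in> P"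
  by (induction w) auto
lemma hd_P: "w \<in> lists P \<Longrightarrow> w \<noteq> [] \<Longrightarrow> hd w \<in> P"
  by (cases w) auto
lemma MD_simps[simp]: "drc_carrier MD = CM" "drc_mult MD = MM"
  unfolding Mdrc_def by simp_all

lemma fst_img: "w \<in> lists P \<Longrightarrow> w \<noteq> [] \<Longrightarrow> x \<in> P \<Longrightarrow> th (last w) (fst (hp w) x) = fst (hp w) x"
proof (induction w arbitrary: x)
  case Nil then show ?case by simp
next
  case (Cons a w) then show ?case
    by (cases "w = []") (auto simp: hp_Cons MM_fst hat_fst idth cl)
qed
lemma snd_img: "w \<in> lists P \<Longrightarrow> w \<noteq> [] \<Longrightarrow> x \<in> P \<Longrightarrow> de (hd w) (snd (hp w) x) = snd (hp w) x"
proof (induction w arbitrary: x)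
  case Nil then show ?case by simp
next
  case (Cons a w)
  have "snd (hp w) x \<in> P" if "w \<noteq> []" using okM_hp[of w] Cons that unfolding okM_def okf_def by auto
  then show ?case using Cons
    by (cases "w = []") (auto simp: hp_Cons MM_snd hat_snd idde cl)
qed
lemma hp_P: "w \<in> lists P \<Longrightarrow> w \<noteq> [] \<Longrightarrow> x \<in> P \<Longrightarrow> fst (hp w) x \<in> P \<and> snd (hp w) x \<in> P"
  using okM_hp unfolding okM_def okf_def by blast
lemma CM_P: "a \<in> CM \<Longrightarrow> x \<in> P \<Longrightarrow> fst a x \<in> P \<and> snd a x \<in> P"
  using okM_CM unfolding okM_def okf_def by blast

lemma mono_hp: "w \<in> lists P \<Longrightarrow> w \<noteq> [] \<Longrightarrow> r \<in> P \<Longrightarrow> s \<in> P \<Longrightarrow> lep r s \<Longrightarrow>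
   lep (fst (hp w) r) (fst (hp w) s) \<and> lep (snd (hp w) r) (snd (hp w) s)"
proof (induction w arbitrary: r s)
  case Nil then show ?case by simp
next
  case (Cons a w)
  have a: "a \<in> P" using Cons by simp
  have t: "lep (th a r) (th a s)"
    using mono_th[OF a \<open>s\<in>P\<close> \<open>r\<in>P\<close>] Cons.prems le_th cl a unfolding lep_def by metis
  have d: "lep (de a r) (de a s)" if "r \<in> P" "s \<in> P" "lep r s" for r s
    using mono_de[OF a \<open>s\<in>P\<close> \<open>r\<in>P\<close>] that unfolding lep_def by metis
  show ?case
  proof (cases "w = []")
    case True then show ?thesis using t d Cons.prems by (auto simp: hat_fst hat_snd)
  next
    case False
    have "lep (fst (hp w) (th a r)) (fst (hp w) (th a s))" using Cons t cl a False by auto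
    moreover have "lep (snd (hp w) r) (snd (hp w) s)" using Cons False by auto
    then have "lep (de a (snd (hp w) r)) (de a (snd (hp w) s))" using d hp_P Cons False by auto
    moreover have "fst (hp (a#w)) r = fst (hp w) (th a r)" "fst (hp (a#w)) s = fst (hp w) (th a s)"
      using False Cons.prems by (simp_all add: hp_Cons MM_fst hat_fst)
    moreover have "snd (hp (a#w)) r = de a (snd (hp w) r)" "snd (hp (a#w)) s = de a (snd (hp w) s)"
      using False Cons.prems hp_P[of w r] hp_P[of w s] by (simp_all add: hp_Cons MM_snd hat_snd)
    ultimately show ?thesis by simp
  qed
qed
lemma mono_CM: "a \<in> CM \<Longrightarrow> r \<in> P \<Longrightarrow> s \<in> P \<Longrightarrow> lep r s \<Longrightarrow>
   lep (fst a r) (fst a s) \<and> lep (snd a r) (snd a s)"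
  using CM_hp mono_hp by metis

lemma fst_hp_idem: "b \<in> P \<Longrightarrow> w \<in> lists P \<Longrightarrow> x \<in> P \<Longrightarrow> fst (hp (b#w)) (th b x) = fst (hp (b#w)) x"
  by (cases "w = []") (auto simp: hp_Cons MM_fst hat_fst idth cl)

lemma chain_fst: "fch w \<Longrightarrow> fst (hp w) (hd w) = last w"
proof (induction w rule: induct_list012)
  case 1 then show ?case by (simp add: fchain_def)
next
  case (2 p) then show ?case by (simp add: hat_fst ax)
next
  case (3 a b w')
  have F: "fF th de a b" and ch: "fch (b#w')" and aP: "a \<in> P" using "3.prems" by auto
  have bP: "b \<in> P" and w'P: "w' \<in> lists P" using fch_P[OF ch] by auto
  have "fst (hp (a#b#w')) a = fst (hp (b#w')) (th a a)" using aP by (simp add: MM_fst hat_fst)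
  also have "\<dots> = fst (hp (b#w')) a" using ax(1)[OF aP aP] by simp
  also have "\<dots> = fst (hp (b#w')) (th b a)" using fst_hp_idem[OF bP w'P aP] by simp
  also have "\<dots> = fst (hp (b#w')) b" using F unfolding fF_def by metis
  also have "\<dots> = last (b#w')" using "3.IH"(2)[OF ch] by simp
  finally show ?case by simp
qed
lemma chain_snd: "fch w \<Longrightarrow> snd (hp w) (last w) = hd w"
proof (induction w rule: induct_list012)
  case 1 then show ?case by (simp add: fchain_def)
next
  case (2 p) then show ?case by (simp add: hat_snd ax)
next
  case (3 a b w')
  have F: "fF th de a b" and ch: "fch (b#w')" and aP: "a \<in> P" using "3.prems" by auto
  have lP: "last (b#w') \<in> P" using fch_P[OF ch] last_P by blast
  have e: "hp (a#b#w') = MM (hat a) (hp (b#w'))" by simp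
  have l: "last (a#b#w') = last (b#w')" by simp
  have sP: "snd (hp (b#w')) (last (b#w')) \<in> P" using lP hp_P[of "b#w'" "last (b#w')"] fch_P[OF ch] by blast
  have "snd (hp (a#b#w')) (last (a#b#w')) = de a (snd (hp (b#w')) (last (b#w')))"
    unfolding e l using lP sP by (simp only: MM_snd hat_snd restrict_apply' )
  also have "\<dots> = de a b" using "3.IH"(2)[OF ch] by simp
  also have "\<dots> = a" using F unfolding fF_def by metis
  finally show ?case by simp
qed

lemma lep_antisym: "a \<in> P \<Longrightarrow> b \<in> P \<Longrightarrow> lep a b \<Longrightarrow> lep b a \<Longrightarrow> a = b"
  unfolding lep_def using antisym by blast

lemma Dchar: assumes "a \<in> CM" "p \<in> P" "\<exists>x\<in>P. snd a x = p" "\<forall>x\<in>P. lep (snd a x) p"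
  shows "drc_D MD a = hat p"
proof -
  define ps where "ps = (SOME ps. fch ps \<and> hp ps = a)"
  have "\<exists>ps. fch ps \<and> hp ps = a" using CM_chain[OF assms(1)] by metis
  from someI_ex[OF this] have ps: "fch ps" "hp ps = a" unfolding ps_def by auto
  have psP: "ps \<in> lists P" "ps \<noteq> []" using fch_P[OF ps(1)] by auto
  have lP: "last ps \<in> P" using psP last_P by blast
  have hP: "hd ps \<in> P" using psP hd_P by blast
  obtain x0 where x0: "x0 \<in> P" "snd a x0 = p" using assms(3) by auto
  have 1: "lep p (hd ps)" using snd_img[OF psP x0(1)] ps(2) x0(2) unfolding lep_def by simp
  have "snd a (last ps) = hd ps" using chain_snd[OF ps(1)] ps(2) by simp
  then have 2: "lep (hd ps) p" using assms(4) lP by metis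
  have "hd ps = p" using lep_antisym[OF hP assms(2) 2 1] .
  then show ?thesis unfolding ps_def Mdrc_def by simp
qed
lemma Rchar: assumes "a \<in> CM" "p \<in> P" "\<exists>x\<in>P. fst a x = p" "\<forall>x\<in>P. lep (fst a x) p"
  shows "drc_R MD a = hat p"
proof -
  define ps where "ps = (SOME ps. fch ps \<and> hp ps = a)"
  have "\<exists>ps. fch ps \<and> hp ps = a" using CM_chain[OF assms(1)] by metis
  from someI_ex[OF this] have ps: "fch ps" "hp ps = a" unfolding ps_def by auto
  have psP: "ps \<in> lists P" "ps \<noteq> []" using fch_P[OF ps(1)] by auto
  have lP: "last ps \<in> P" using psP last_P by blast
  have hP: "hd ps \<in> P" using psP hd_P by blast
  obtain x0 where x0: "x0 \<in> P" "fst a x0 = p" using assms(3) by auto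
  have "th (last ps) p = p" using fst_img[OF psP x0(1)] ps(2) x0(2) by simp
  then have 1: "lep p (last ps)" using le_th[OF assms(2) lP] unfolding lep_def by simp
  have "fst a (hd ps) = last ps" using chain_fst[OF ps(1)] ps(2) by simp
  then have 2: "lep (last ps) p" using assms(4) hP by metis
  have "last ps = p" using lep_antisym[OF lP assms(2) 2 1] .
  then show ?thesis unfolding ps_def Mdrc_def by simp
qed
end

context pa begin

lemma hat_CM: "p \<in> P \<Longrightarrow> hat p \<in> CM" by (rule sgen_base) simp
lemma MM_CM: "a \<in> CM \<Longrightarrow> b \<in> CM \<Longrightarrow> MM a b \<in> CM" by (rule sgen_mult)

lemma D_hp: "fch w \<Longrightarrow> drc_D MD (hp w) = hat (hd w)"
proof -
  assume ch: "fch w"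
  have wP: "w \<in> lists P" "w \<noteq> []" using fch_P[OF ch] by auto
  have lP: "last w \<in> P" using wP last_P by blast
  have hP: "hd w \<in> P" using wP hd_P by blast
  show ?thesis
  proof (rule Dchar)
    show "hp w \<in> CM" using hp_CM wP by auto
    show "\<exists>x\<in>P. snd (hp w) x = hd w" using chain_snd[OF ch] lP by auto
    show "\<forall>x\<in>P. lep (snd (hp w) x) (hd w)" using snd_img[OF wP] unfolding lep_def by auto
  qed (use hP in auto)
qed
lemma R_hp: "fch w \<Longrightarrow> drc_R MD (hp w) = hat (last w)"
proof -
  assume ch: "fch w"
  have wP: "w \<in> lists P" "w \<noteq> []" using fch_P[OF ch] by auto
  have lP: "last w \<in> P" using wP last_P by blast
  have hP: "hd w \<in> P" using wP hd_P by blast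
  show ?thesis
  proof (rule Rchar)
    show "hp w \<in> CM" using hp_CM wP by auto
    show "\<exists>x\<in>P. fst (hp w) x = last w" using chain_fst[OF ch] hP by auto
    show "\<forall>x\<in>P. lep (fst (hp w) x) (last w)"
    proof
      fix x assume x: "x \<in> P"
      have "th (last w) (fst (hp w) x) = fst (hp w) x" using fst_img[OF wP x] .
      then show "lep (fst (hp w) x) (last w)" using le_th[OF _ lP] hp_P[OF wP x] unfolding lep_def by metis
    qed
  qed (use lP in auto)
qed

lemma D_ex: "a \<in> CM \<Longrightarrow> \<exists>p\<in>P. drc_D MD a = hat p \<and> (\<exists>x\<in>P. snd a x = p) \<and> (\<forall>x\<in>P. lep (snd a x) p)"
proof -
  assume a: "a \<in> CM"
  obtain w where w: "fch w" "a = hp w" using CM_chain[OF a] by auto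
  have wP: "w \<in> lists P" "w \<noteq> []" using fch_P[OF w(1)] by auto
  have lP: "last w \<in> P" using wP last_P by blast
  have hP: "hd w \<in> P" using wP hd_P by blast
  show ?thesis using D_hp[OF w(1)] w(2) hP chain_snd[OF w(1)] lP snd_img[OF wP] unfolding lep_def
    by (intro bexI[of _ "hd w"]) auto
qed
lemma R_ex: "a \<in> CM \<Longrightarrow> \<exists>p\<in>P. drc_R MD a = hat p \<and> (\<exists>x\<in>P. fst a x = p) \<and> (\<forall>x\<in>P. lep (fst a x) p)"
proof -
  assume a: "a \<in> CM"
  obtain w where w: "fch w" "a = hp w" using CM_chain[OF a] by auto
  have wP: "w \<in> lists P" "w \<noteq> []" using fch_P[OF w(1)] by auto
  have lP: "last w \<in> P" using wP last_P by blast
  have hP: "hd w \<in> P" using wP hd_P by blast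
  have b: "\<forall>x\<in>P. lep (fst a x) (last w)"
  proof
    fix x assume x: "x \<in> P"
    have "th (last w) (fst (hp w) x) = fst (hp w) x" using fst_img[OF wP x] .
    then show "lep (fst a x) (last w)" using le_th[OF _ lP] hp_P[OF wP x] w(2) unfolding lep_def by metis
  qed
  show ?thesis using R_hp[OF w(1)] w(2) hP chain_fst[OF w(1)] lP b
    by (intro bexI[of _ "last w"]) auto
qed

lemma D_hat: "p \<in> P \<Longrightarrow> drc_D MD (hat p) = hat p"
  using D_hp[of "[p]"] by simp
lemma R_hat: "p \<in> P \<Longrightarrow> drc_R MD (hat p) = hat p"
  using R_hp[of "[p]"] by simp

lemma D_mult_hat: "a \<in> CM \<Longrightarrow> p \<in> P \<Longrightarrow> drc_D MD (MM a (hat p)) = hat (snd a p)"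
proof -
  assume a: "a \<in> CM" and p: "p \<in> P"
  show ?thesis
  proof (rule Dchar)
    show "MM a (hat p) \<in> CM" using MM_CM[OF a hat_CM[OF p]] .
    show "snd a p \<in> P" using CM_P[OF a p] by simp
    show "\<exists>x\<in>P. snd (MM a (hat p)) x = snd a p" using p ax(2)[OF p p] by (intro bexI[of _ p]) (auto simp: MM_snd hat_snd)
    show "\<forall>x\<in>P. lep (snd (MM a (hat p)) x) (snd a p)"
    proof
      fix x assume x: "x \<in> P"
      have "lep (de p x) p" unfolding lep_def using idde[OF p x] .
      then have "lep (snd a (de p x)) (snd a p)" using mono_CM[OF a _ p] cl[OF p x] by blast
      then show "lep (snd (MM a (hat p)) x) (snd a p)" using x cl[OF p x] by (simp add: MM_snd hat_snd)
    qed
  qed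
qed
lemma R_hat_mult: "a \<in> CM \<Longrightarrow> p \<in> P \<Longrightarrow> drc_R MD (MM (hat p) a) = hat (fst a p)"
proof -
  assume a: "a \<in> CM" and p: "p \<in> P"
  show ?thesis
  proof (rule Rchar)
    show "MM (hat p) a \<in> CM" using MM_CM[OF hat_CM[OF p] a] .
    show "fst a p \<in> P" using CM_P[OF a p] by simp
    show "\<exists>x\<in>P. fst (MM (hat p) a) x = fst a p" using p ax(1)[OF p p] by (intro bexI[of _ p]) (auto simp: MM_fst hat_fst)
    show "\<forall>x\<in>P. lep (fst (MM (hat p) a) x) (fst a p)"
    proof
      fix x assume x: "x \<in> P"
      have "lep (th p x) p" unfolding lep_def using ax(7)[OF p p x] .
      then have "lep (fst a (th p x)) (fst a p)" using mono_CM[OF a _ p] cl[OF p x] by blast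
      then show "lep (fst (MM (hat p) a) x) (fst a p)" using x cl[OF p x] by (simp add: MM_fst hat_fst)
    qed
  qed
qed

lemma sandwich: "e \<in> P \<Longrightarrow> f \<in> P \<Longrightarrow> lep f e \<Longrightarrow> MM (MM (hat e) (hat f)) (hat e) = hat f"
  unfolding lep_def
  by (rule okM_eq) (auto simp: okM_MM okM_hat MM_fst MM_snd hat_fst hat_snd cl h1 h2 h3 h4)

lemma D_mult: assumes "a \<in> CM" "b \<in> CM" "q \<in> P" "\<exists>x\<in>P. snd b x = q" "\<forall>x\<in>P. lep (snd b x) q"
  shows "drc_D MD (MM a b) = hat (snd a q)"
proof (rule Dchar)
  show "MM a b \<in> CM" using MM_CM assms by auto
  show "snd a q \<in> P" using CM_P assms by auto
  show "\<exists>x\<in>P. snd (MM a b) x = snd a q" using assms(4) by (auto simp: MM_snd)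
  show "\<forall>x\<in>P. lep (snd (MM a b) x) (snd a q)"
  proof
    fix x assume x: "x \<in> P"
    have "lep (snd a (snd b x)) (snd a q)" using mono_CM[OF assms(1) _ assms(3)] assms(5) x CM_P[OF assms(2) x] by blast
    then show "lep (snd (MM a b) x) (snd a q)" using x by (simp add: MM_snd)
  qed
qed
lemma R_mult: assumes "a \<in> CM" "b \<in> CM" "r \<in> P" "\<exists>x\<in>P. fst a x = r" "\<forall>x\<in>P. lep (fst a x) r"
  shows "drc_R MD (MM a b) = hat (fst b r)"
proof (rule Rchar)
  show "MM a b \<in> CM" using MM_CM assms by auto
  show "fst b r \<in> P" using CM_P assms by auto
  show "\<exists>x\<in>P. fst (MM a b) x = fst b r" using assms(4) by (auto simp: MM_fst)
  show "\<forall>x\<in>P. lep (fst (MM a b) x) (fst b r)"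
  proof
    fix x assume x: "x \<in> P"
    have "lep (fst b (fst a x)) (fst b r)" using mono_CM[OF assms(2) _ assms(3)] assms(5) x CM_P[OF assms(1) x] by blast
    then show "lep (fst (MM a b) x) (fst b r)" using x by (simp add: MM_fst)
  qed
qed

lemma DA: "a \<in> CM \<Longrightarrow> MM (drc_D MD a) a = a"
proof -
  assume a: "a \<in> CM"
  obtain w where w: "fch w" "a = hp w" using CM_chain[OF a] by auto
  have wP: "w \<in> lists P" "w \<noteq> []" using fch_P[OF w(1)] by auto
  obtain p rest where pr: "w = p # rest" using wP by (cases w) auto
  have pP: "p \<in> P" "rest \<in> lists P" using wP pr by auto
  have "MM (hat p) (hp w) = hp ([p,p]@rest)" using pr by (simp add: hp_Cons)
  also have "\<dots> = hp ([p]@rest)" using frel_hp[OF frel_R[OF fr_idem[OF pP(1)] pP(2)]] .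
  finally show ?thesis using D_hp[OF w(1)] w(2) pr by simp
qed
lemma AR: "a \<in> CM \<Longrightarrow> MM a (drc_R MD a) = a"
proof -
  assume a: "a \<in> CM"
  obtain w where w: "fch w" "a = hp w" using CM_chain[OF a] by auto
  have wP: "w \<in> lists P" "w \<noteq> []" using fch_P[OF w(1)] by auto
  obtain w0 l where pr: "w = w0 @ [l]" using wP by (metis rev_exhaust)
  have pP: "l \<in> P" "w0 \<in> lists P" using wP pr by auto
  have "MM (hp w) (hat l) = hp (w0@[l,l])" using hp_append[of w "[l]"] wP pP pr by simp
  also have "\<dots> = hp (w0@[l])" using frel_hp[OF frel_L[OF fr_idem[OF pP(1)] pP(2)]] by simp
  finally show ?thesis using R_hp[OF w(1)] w(2) pr by simp
qed

lemma drc_MD: "drc MD"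
  unfolding drc_def Let_def MD_simps
proof (intro conjI ballI)
  fix a b c assume a: "a \<in> CM" and b: "b \<in> CM"
  show "MM a b \<in> CM" using MM_CM a b .
  obtain e where e: "e \<in> P" "drc_D MD a = hat e" "\<exists>x\<in>P. snd a x = e" "\<forall>x\<in>P. lep (snd a x) e" using D_ex[OF a] by blast
  obtain q where q: "q \<in> P" "drc_D MD b = hat q" "\<exists>x\<in>P. snd b x = q" "\<forall>x\<in>P. lep (snd b x) q" using D_ex[OF b] by blast
  obtain r where r: "r \<in> P" "drc_R MD a = hat r" "\<exists>x\<in>P. fst a x = r" "\<forall>x\<in>P. lep (fst a x) r" using R_ex[OF a] by blast
  obtain e' where e': "e' \<in> P" "drc_R MD b = hat e'" "\<exists>x\<in>P. fst b x = e'" "\<forall>x\<in>P. lep (fst b x) e'" using R_ex[OF b] by blast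
  have Dab: "drc_D MD (MM a b) = hat (snd a q)" using D_mult[OF a b q(1,3,4)] .
  have Rab: "drc_R MD (MM a b) = hat (fst b r)" using R_mult[OF a b r(1,3,4)] .
  show "drc_D MD (MM a b) = drc_D MD (MM a (drc_D MD b))" using Dab D_mult_hat[OF a q(1)] q(2) by simp
  show "drc_R MD (MM a b) = drc_R MD (MM (drc_R MD a) b)" using Rab R_hat_mult[OF b r(1)] r(2) by simp
  show "drc_D MD (MM a b) = MM (MM (drc_D MD a) (drc_D MD (MM a b))) (drc_D MD a)"
    using Dab e sandwich[OF e(1), of "snd a q"] CM_P[OF a q(1)] q(1) by simp
  show "drc_R MD (MM a b) = MM (MM (drc_R MD b) (drc_R MD (MM a b))) (drc_R MD b)"
    using Rab e' sandwich[OF e'(1), of "fst b r"] CM_P[OF b r(1)] r(1) by simp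
next
  fix a b c assume a: "a \<in> CM" and b: "b \<in> CM" and c: "c \<in> CM"
  show "MM (MM a b) c = MM a (MM b c)" using MM_assoc okM_CM a c by blast
next
  fix a assume a: "a \<in> CM"
  obtain e where e: "e \<in> P" "drc_D MD a = hat e" using D_ex[OF a] by blast
  obtain r where r: "r \<in> P" "drc_R MD a = hat r" using R_ex[OF a] by blast
  show "drc_D MD a \<in> CM" using e hat_CM by simp
  show "drc_R MD a \<in> CM" using r hat_CM by simp
  show "MM (drc_D MD a) a = a" using DA[OF a] .
  show "MM a (drc_R MD a) = a" using AR[OF a] .
  show "drc_R MD (drc_D MD a) = drc_D MD a" using e R_hat by simp
  show "drc_D MD (drc_R MD a) = drc_R MD a" using r D_hat by simp
qed

end

lemma mu_unique: assumes "drc_cong S \<sigma>" "proj_separating S \<sigma>"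
   "\<And>\<tau>. drc_cong S \<tau> \<Longrightarrow> proj_separating S \<tau> \<Longrightarrow> \<tau> \<subseteq> \<sigma>"
  shows "mu S = \<sigma>"
  unfolding mu_def
proof (rule the_equality)
  show "drc_cong S \<sigma> \<and> proj_separating S \<sigma> \<and> (\<forall>\<tau>. drc_cong S \<tau> \<and> proj_separating S \<tau> \<longrightarrow> \<tau> \<subseteq> \<sigma>)"
    using assms by blast
next
  fix \<sigma>' assume "drc_cong S \<sigma>' \<and> proj_separating S \<sigma>' \<and> (\<forall>\<tau>. drc_cong S \<tau> \<and> proj_separating S \<tau> \<longrightarrow> \<tau> \<subseteq> \<sigma>')"
  then show "\<sigma>' = \<sigma>" using assms by blast
qed

lemma cong_sub: "drc_cong S \<tau> \<Longrightarrow> \<tau> \<subseteq> drc_carrier S \<times> drc_carrier S"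
  unfolding drc_cong_def equiv_def refl_on_def by blast

context pa begin

lemma projs_MD: "projs MD = hat ` P"
proof
  show "projs MD \<subseteq> hat ` P" unfolding projs_def using D_ex by fastforce
  show "hat ` P \<subseteq> projs MD" unfolding projs_def using D_hat hat_CM
    by (auto intro!: image_eqI)
qed

lemma hat_inj: "inj_on hat P"
proof (rule inj_onI)
  fix p q assume p: "p \<in> P" and q: "q \<in> P" and e: "hat p = hat q"
  have "\<And>x. x \<in> P \<Longrightarrow> de p x = de q x"
  proof -
    fix x assume "x \<in> P"
    have "snd (hat p) x = snd (hat q) x" using e by simp
    then show "de p x = de q x" using \<open>x \<in> P\<close> by (simp add: hat_snd)
  qed
  then have "de q p = p" "de p q = q" using ax(2)[OF p p] ax(2)[OF q q] p q by metis+
  then show "p = q" using antisym p q by blast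
qed

lemma proj_generated_MD: "proj_generated MD"
  unfolding proj_generated_def projs_MD by simp

lemma iso_P: "proj_alg_iso P th de (projs MD) (thS MD) (deS MD) hat"
  unfolding proj_alg_iso_def projs_MD
proof (intro conjI ballI)
  show "bij_betw hat P (hat ` P)" using hat_inj by (simp add: bij_betw_def)
  fix p q assume p: "p \<in> P" and q: "q \<in> P"
  show "hat (th p q) = thS MD (hat p) (hat q)"
    unfolding thS_def using R_hat_mult[OF hat_CM[OF p] q] q by (simp add: hat_fst)
  show "hat (de p q) = deS MD (hat p) (hat q)"
    unfolding deS_def using D_mult_hat[OF hat_CM[OF p] q] q by (simp add: hat_snd)
qed

lemma cong_Id: "drc_cong MD (Id_on CM)"
  unfolding drc_cong_def
proof (intro conjI)
  show "equiv (drc_carrier MD) (Id_on CM)" by (simp add: equiv_def refl_on_def sym_def trans_def) blast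
  show "\<forall>(a, b)\<in>Id_on CM. \<forall>c\<in>drc_carrier MD. (drc_mult MD a c, drc_mult MD b c) \<in> Id_on CM \<and> (drc_mult MD c a, drc_mult MD c b) \<in> Id_on CM"
    using MM_CM by auto
  show "\<forall>(a, b)\<in>Id_on CM. (drc_D MD a, drc_D MD b) \<in> Id_on CM \<and> (drc_R MD a, drc_R MD b) \<in> Id_on CM"
    using drc_MD unfolding drc_def Let_def by auto
qed

lemma fundamental_MD: "fundamental MD"
  unfolding fundamental_def MD_simps
proof (rule mu_unique)
  show "drc_cong MD (Id_on CM)" by (rule cong_Id)
  show "proj_separating MD (Id_on CM)" unfolding proj_separating_def by auto
  fix \<tau> assume c: "drc_cong MD \<tau>" and s: "proj_separating MD \<tau>"
  show "\<tau> \<subseteq> Id_on CM"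
  proof
    fix z assume z: "z \<in> \<tau>"
    obtain a b where ab: "z = (a,b)" by (cases z)
    have aC: "a \<in> CM" and bC: "b \<in> CM" using cong_sub[OF c] z ab by auto
    have "a = b"
    proof (rule okM_eq[OF okM_CM[OF aC] okM_CM[OF bC]])
      fix x assume x: "x \<in> P"
      have "(MM (hat x) a, MM (hat x) b) \<in> \<tau>" using c z ab hat_CM[OF x] unfolding drc_cong_def by fastforce
      then have "(drc_R MD (MM (hat x) a), drc_R MD (MM (hat x) b)) \<in> \<tau>" using c unfolding drc_cong_def by fastforce
      then have "(hat (fst a x), hat (fst b x)) \<in> \<tau>" using R_hat_mult aC bC x by simp
      then have "hat (fst a x) = hat (fst b x)" using s CM_P aC bC x unfolding proj_separating_def projs_MD by blast
      then show "fst a x = fst b x" using hat_inj CM_P aC bC x unfolding inj_on_def by blast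
      have "(MM a (hat x), MM b (hat x)) \<in> \<tau>" using c z ab hat_CM[OF x] unfolding drc_cong_def by fastforce
      then have "(drc_D MD (MM a (hat x)), drc_D MD (MM b (hat x))) \<in> \<tau>" using c unfolding drc_cong_def by fastforce
      then have "(hat (snd a x), hat (snd b x)) \<in> \<tau>" using D_mult_hat aC bC x by simp
      then have "hat (snd a x) = hat (snd b x)" using s CM_P aC bC x unfolding proj_separating_def projs_MD by blast
      then show "snd a x = snd b x" using hat_inj CM_P aC bC x unfolding inj_on_def by blast
    qed
    then show "z \<in> Id_on CM" using ab aC by (simp add: Id_onI)
  qed
qed

end

lemma q_mem: "equiv X R \<Longrightarrow> C \<in> X//R \<Longrightarrow> a \<in> C \<Longrightarrow> C = R``{a} \<and> a \<in> X"
  by (metis equiv_class_eq equiv_class_self quotientE Image_singleton_iff equiv_type subsetD mem_Sigma_iff)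
lemma q_some: "equiv X R \<Longrightarrow> C \<in> X//R \<Longrightarrow> (SOME a. a \<in> C) \<in> C"
  by (metis in_quotient_imp_non_empty some_in_eq)

context pa begin

abbreviation "FC \<equiv> (lists P - {[]}) // FR"
abbreviation "FD \<equiv> Fdrc P th de"
definition Phi :: "'p list set \<Rightarrow> ('p \<Rightarrow> 'p) \<times> ('p \<Rightarrow> 'p)" where
  "Phi A = hp (SOME u. u \<in> A)"

lemma FD_simps[simp]: "drc_carrier FD = FC"
  "drc_mult FD A B = FR `` {(SOME u. u \<in> A) @ (SOME v. v \<in> B)}"
  "drc_D FD A = FR `` {[hd (SOME w. w \<in> A \<and> fch w)]}"
  "drc_R FD A = FR `` {[last (SOME w. w \<in> A \<and> fch w)]}"
  unfolding Fdrc_def by simp_all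

lemma equiv_FR: "equiv (lists P - {[]}) FR"
proof (rule equivI)
  show "FR \<subseteq> (lists P - {[]}) \<times> (lists P - {[]})" using frel_lists by auto
  show "refl_on (lists P - {[]}) FR" unfolding refl_on_def using frel_refl' frel_lists by auto
  show "sym FR" unfolding sym_def using fr_sym by blast
  show "trans FR" unfolding trans_def using fr_trans by blast
qed

lemma FC_mem: "A \<in> FC \<Longrightarrow> u \<in> A \<Longrightarrow> A = FR``{u} \<and> u \<in> lists P \<and> u \<noteq> []"
  using q_mem[OF equiv_FR] by blast
lemma FC_some: "A \<in> FC \<Longrightarrow> (SOME u. u \<in> A) \<in> A"
  using q_some[OF equiv_FR] by blast
lemma class_in: "u \<in> lists P \<Longrightarrow> u \<noteq> [] \<Longrightarrow> FR``{u} \<in> FC"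
  by (rule quotientI) simp
lemma class_self: "u \<in> lists P \<Longrightarrow> u \<noteq> [] \<Longrightarrow> u \<in> FR``{u}"
  using equiv_class_self[OF equiv_FR] by simp

lemma Phi_mem: "A \<in> FC \<Longrightarrow> u \<in> A \<Longrightarrow> Phi A = hp u"
proof -
  assume A: "A \<in> FC" and u: "u \<in> A"
  have s: "(SOME u. u \<in> A) \<in> A" using FC_some[OF A] .
  have "A = FR``{u}" using FC_mem[OF A u] by blast
  then have "(u, SOME u. u \<in> A) \<in> FR" using s by simp
  then show ?thesis unfolding Phi_def using frel_hp by simp
qed
lemma Phi_class: "u \<in> lists P \<Longrightarrow> u \<noteq> [] \<Longrightarrow> Phi (FR``{u}) = hp u"
  using Phi_mem class_in class_self by blast
lemma Phi_CM: "A \<in> FC \<Longrightarrow> Phi A \<in> CM"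
  using FC_some FC_mem Phi_mem hp_CM by metis

lemma FC_chain: "A \<in> FC \<Longrightarrow> \<exists>w. w \<in> A \<and> fch w"
proof -
  assume A: "A \<in> FC"
  obtain u where u: "u \<in> A" using FC_some[OF A] by blast
  have uP: "A = FR``{u}" "u \<in> lists P" "u \<noteq> []" using FC_mem[OF A u] by auto
  obtain v where v: "fch v" "(u,v) \<in> FR" using normalize[OF uP(2,3)] by blast
  then show ?thesis using uP(1) by auto
qed
lemma FC_chain_some: "A \<in> FC \<Longrightarrow> (SOME w. w \<in> A \<and> fch w) \<in> A \<and> fch (SOME w. w \<in> A \<and> fch w)"
  using FC_chain someI_ex by (metis (no_types, lifting))

lemma mult_FC: "A \<in> FC \<Longrightarrow> B \<in> FC \<Longrightarrow> drc_mult FD A B \<in> FC \<and> Phi (drc_mult FD A B) = MM (Phi A) (Phi B)"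
proof -
  assume A: "A \<in> FC" and B: "B \<in> FC"
  define u where "u = (SOME u. u \<in> A)"
  define v where "v = (SOME u. u \<in> B)"
  have u: "u \<in> A" "u \<in> lists P" "u \<noteq> []" using FC_some[OF A] FC_mem[OF A] unfolding u_def by auto
  have v: "v \<in> B" "v \<in> lists P" "v \<noteq> []" using FC_some[OF B] FC_mem[OF B] unfolding v_def by auto
  have "drc_mult FD A B = FR``{u@v}" unfolding u_def v_def by simp
  moreover have "u@v \<in> lists P" "u@v \<noteq> []" using u v by auto
  ultimately show ?thesis using class_in Phi_class hp_append u v Phi_mem A B by auto
qed

lemma D_FC: "A \<in> FC \<Longrightarrow> drc_D FD A \<in> FC \<and> Phi (drc_D FD A) = drc_D MD (Phi A) \<and> (\<exists>x\<in>P. drc_D FD A = FR``{[x]})"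
proof -
  assume A: "A \<in> FC"
  define w where "w = (SOME w. w \<in> A \<and> fch w)"
  have w: "w \<in> A" "fch w" using FC_chain_some[OF A] unfolding w_def by auto
  have wP: "w \<in> lists P" "w \<noteq> []" using fch_P[OF w(2)] by auto
  have hP: "hd w \<in> P" using hd_P wP by blast
  have e: "drc_D FD A = FR``{[hd w]}" unfolding w_def by simp
  show ?thesis unfolding e using class_in[of "[hd w]"] Phi_class[of "[hd w]"] hP D_hp[OF w(2)] Phi_mem[OF A w(1)]
    by auto
qed
lemma R_FC: "A \<in> FC \<Longrightarrow> drc_R FD A \<in> FC \<and> Phi (drc_R FD A) = drc_R MD (Phi A) \<and> (\<exists>x\<in>P. drc_R FD A = FR``{[x]})"
proof -
  assume A: "A \<in> FC"
  define w where "w = (SOME w. w \<in> A \<and> fch w)"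
  have w: "w \<in> A" "fch w" using FC_chain_some[OF A] unfolding w_def by auto
  have wP: "w \<in> lists P" "w \<noteq> []" using fch_P[OF w(2)] by auto
  have hP: "last w \<in> P" using last_P wP by blast
  have e: "drc_R FD A = FR``{[last w]}" unfolding w_def by simp
  show ?thesis unfolding e using class_in[of "[last w]"] Phi_class[of "[last w]"] hP R_hp[OF w(2)] Phi_mem[OF A w(1)]
    by auto
qed

lemma D_single: "x \<in> P \<Longrightarrow> drc_D FD (FR``{[x]}) = FR``{[x]}"
proof -
  assume x: "x \<in> P"
  have A: "FR``{[x]} \<in> FC" using class_in x by simp
  obtain y where y: "y \<in> P" "drc_D FD (FR``{[x]}) = FR``{[y]}" using D_FC[OF A] by blast
  have "hat y = hat x" using D_FC[OF A] y Phi_class[of "[y]"] Phi_class[of "[x]"] x D_hat by simp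
  then have "y = x" using hat_inj x y unfolding inj_on_def by blast
  then show ?thesis using y by simp
qed

definition K where "K = {(A,B). A \<in> FC \<and> B \<in> FC \<and> Phi A = Phi B}"

lemma equiv_K: "equiv FC K"
  by (rule equivI) (auto simp: K_def refl_on_def sym_def trans_def)

lemma cong_K: "drc_cong FD K"
  unfolding drc_cong_def FD_simps(1)
proof (intro conjI)
  show "equiv FC K" by (rule equiv_K)
  show "\<forall>(a, b)\<in>K. \<forall>c\<in>FC. (drc_mult FD a c, drc_mult FD b c) \<in> K \<and> (drc_mult FD c a, drc_mult FD c b) \<in> K"
  proof (clarify)
    fix a b c assume ab: "(a,b) \<in> K" and c: "c \<in> FC"
    have a: "a \<in> FC" and b: "b \<in> FC" and e: "Phi a = Phi b" using ab unfolding K_def by auto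
    show "(drc_mult FD a c, drc_mult FD b c) \<in> K \<and> (drc_mult FD c a, drc_mult FD c b) \<in> K"
      unfolding K_def using mult_FC[OF a c] mult_FC[OF b c] mult_FC[OF c a] mult_FC[OF c b] e
      by auto
  qed
  show "\<forall>(a, b)\<in>K. (drc_D FD a, drc_D FD b) \<in> K \<and> (drc_R FD a, drc_R FD b) \<in> K"
  proof (clarify)
    fix a b assume ab: "(a,b) \<in> K"
    have a: "a \<in> FC" and b: "b \<in> FC" and e: "Phi a = Phi b" using ab unfolding K_def by auto
    show "(drc_D FD a, drc_D FD b) \<in> K \<and> (drc_R FD a, drc_R FD b) \<in> K"
      unfolding K_def using D_FC[OF a] D_FC[OF b] R_FC[OF a] R_FC[OF b] e
      by auto
  qed
qed

lemma projs_FD: "X \<in> projs FD \<Longrightarrow> \<exists>x\<in>P. X = FR``{[x]}"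
  unfolding projs_def using D_FC by auto
lemma single_projs: "x \<in> P \<Longrightarrow> FR``{[x]} \<in> projs FD"
proof -
  assume x: "x \<in> P"
  have "FR``{[x]} = drc_D FD (FR``{[x]})" using D_single[OF x] by simp
  moreover have "FR``{[x]} \<in> drc_carrier FD" using class_in[of "[x]"] x by simp
  ultimately show ?thesis unfolding projs_def by (rule image_eqI)
qed

lemma sep_K: "proj_separating FD K"
  unfolding proj_separating_def
proof (intro ballI impI)
  fix p q assume p: "p \<in> projs FD" and q: "q \<in> projs FD" and pq: "(p,q) \<in> K"
  obtain x y where xy: "x \<in> P" "p = FR``{[x]}" "y \<in> P" "q = FR``{[y]}" using projs_FD p q by metis
  have "hat x = hat y" using pq xy Phi_class[of "[x]"] Phi_class[of "[y]"] unfolding K_def by simp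
  then have "x = y" using hat_inj xy unfolding inj_on_def by blast
  then show "p = q" using xy by simp
qed

lemma max_K: assumes c: "drc_cong FD \<tau>" and s: "proj_separating FD \<tau>" shows "\<tau> \<subseteq> K"
proof
  fix z assume z: "z \<in> \<tau>"
  obtain A B where ab: "z = (A,B)" by (cases z)
  have A: "A \<in> FC" and B: "B \<in> FC" using cong_sub[OF c] z ab by auto
  have aC: "Phi A \<in> CM" and bC: "Phi B \<in> CM" using Phi_CM A B by auto
  have "Phi A = Phi B"
  proof (rule okM_eq[OF okM_CM[OF aC] okM_CM[OF bC]])
    fix x assume x: "x \<in> P"
    define E where "E = FR``{[x]}"
    have E: "E \<in> FC" unfolding E_def using class_in x by simp
    have PE: "Phi E = hat x" unfolding E_def using Phi_class[of "[x]"] x by simp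
    have "(drc_mult FD E A, drc_mult FD E B) \<in> \<tau>" using c z ab E unfolding drc_cong_def by fastforce
    then have "(drc_R FD (drc_mult FD E A), drc_R FD (drc_mult FD E B)) \<in> \<tau>" using c unfolding drc_cong_def by fastforce
    moreover have "drc_R FD (drc_mult FD E A) \<in> projs FD" "drc_R FD (drc_mult FD E B) \<in> projs FD"
      using R_FC mult_FC E A B single_projs by metis+
    ultimately have "drc_R FD (drc_mult FD E A) = drc_R FD (drc_mult FD E B)" using s unfolding proj_separating_def by blast
    then have "Phi (drc_R FD (drc_mult FD E A)) = Phi (drc_R FD (drc_mult FD E B))" by simp
    then have "drc_R MD (MM (hat x) (Phi A)) = drc_R MD (MM (hat x) (Phi B))"
      using R_FC mult_FC E A B PE by metis
    then have "hat (fst (Phi A) x) = hat (fst (Phi B) x)" using R_hat_mult aC bC x by simp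
    then show "fst (Phi A) x = fst (Phi B) x" using hat_inj CM_P aC bC x unfolding inj_on_def by blast
    have "(drc_mult FD A E, drc_mult FD B E) \<in> \<tau>" using c z ab E unfolding drc_cong_def by fastforce
    then have "(drc_D FD (drc_mult FD A E), drc_D FD (drc_mult FD B E)) \<in> \<tau>" using c unfolding drc_cong_def by fastforce
    moreover have "drc_D FD (drc_mult FD A E) \<in> projs FD" "drc_D FD (drc_mult FD B E) \<in> projs FD"
      using D_FC mult_FC E A B single_projs by metis+
    ultimately have "drc_D FD (drc_mult FD A E) = drc_D FD (drc_mult FD B E)" using s unfolding proj_separating_def by blast
    then have "Phi (drc_D FD (drc_mult FD A E)) = Phi (drc_D FD (drc_mult FD B E))" by simp
    then have "drc_D MD (MM (Phi A) (hat x)) = drc_D MD (MM (Phi B) (hat x))"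
      using D_FC mult_FC E A B PE by metis
    then have "hat (snd (Phi A) x) = hat (snd (Phi B) x)" using D_mult_hat aC bC x by simp
    then show "snd (Phi A) x = snd (Phi B) x" using hat_inj CM_P aC bC x unfolding inj_on_def by blast
  qed
  then show "z \<in> K" using ab A B unfolding K_def by simp
qed

lemma mu_FD: "mu FD = K"
  using mu_unique[OF cong_K sep_K max_K] by blast

end

lemma iso_inv: assumes iso: "drc_iso S T f"
  and cm: "\<And>a b. a \<in> drc_carrier S \<Longrightarrow> b \<in> drc_carrier S \<Longrightarrow> drc_mult S a b \<in> drc_carrier S"
  and cD: "\<And>a. a \<in> drc_carrier S \<Longrightarrow> drc_D S a \<in> drc_carrier S"
  and cR: "\<And>a. a \<in> drc_carrier S \<Longrightarrow> drc_R S a \<in> drc_carrier S"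
  shows "drc_iso T S (inv_into (drc_carrier S) f)"
proof -
  let ?g = "inv_into (drc_carrier S) f"
  have bij: "bij_betw f (drc_carrier S) (drc_carrier T)" using iso unfolding drc_iso_def by blast
  have inj: "inj_on f (drc_carrier S)" using bij bij_betw_def by blast
  have hm: "\<And>a b. a \<in> drc_carrier S \<Longrightarrow> b \<in> drc_carrier S \<Longrightarrow> f (drc_mult S a b) = drc_mult T (f a) (f b)"
    and hD: "\<And>a. a \<in> drc_carrier S \<Longrightarrow> f (drc_D S a) = drc_D T (f a)"
    and hR: "\<And>a. a \<in> drc_carrier S \<Longrightarrow> f (drc_R S a) = drc_R T (f a)"
    using iso unfolding drc_iso_def by auto
  have gi: "\<And>a. a \<in> drc_carrier T \<Longrightarrow> ?g a \<in> drc_carrier S \<and> f (?g a) = a"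
    using bij by (metis bij_betw_imp_surj_on f_inv_into_f inv_into_into)
  have gf: "\<And>a. a \<in> drc_carrier S \<Longrightarrow> ?g (f a) = a" using inj by (simp add: inv_into_f_f)
  show ?thesis unfolding drc_iso_def
  proof (intro conjI ballI)
    show "bij_betw ?g (drc_carrier T) (drc_carrier S)" using bij by (rule bij_betw_inv_into)
    fix a assume a: "a \<in> drc_carrier T"
    show "?g (drc_D T a) = drc_D S (?g a)" using hD[of "?g a"] gi[OF a] gf cD by metis
    show "?g (drc_R T a) = drc_R S (?g a)" using hR[of "?g a"] gi[OF a] gf cR by metis
    fix b assume b: "b \<in> drc_carrier T"
    show "?g (drc_mult T a b) = drc_mult S (?g a) (?g b)" using hm[of "?g a" "?g b"] gi[OF a] gi[OF b] gf cm by metis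
  qed
qed

context pa begin

abbreviation "QF \<equiv> quot FD K"
definition fq where "fq Q = Phi (SOME A. A \<in> Q)"

lemma Q_simps: "drc_carrier QF = FC // K"
  "drc_mult QF X Y = K``{drc_mult FD (SOME a. a \<in> X) (SOME b. b \<in> Y)}"
  "drc_D QF X = K``{drc_D FD (SOME a. a \<in> X)}"
  "drc_R QF X = K``{drc_R FD (SOME a. a \<in> X)}"
  unfolding quot_def by simp_all

lemma fq_mem: "Q \<in> FC // K \<Longrightarrow> A \<in> Q \<Longrightarrow> fq Q = Phi A \<and> A \<in> FC"
proof -
  assume Q: "Q \<in> FC // K" and A: "A \<in> Q"
  have s: "(SOME A. A \<in> Q) \<in> Q" using q_some[OF equiv_K Q] .
  have "(A, SOME A. A \<in> Q) \<in> K" using in_quotient_imp_in_rel[OF equiv_K Q] A s by blast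
  then show ?thesis unfolding fq_def K_def by auto
qed
lemma Q_some: "Q \<in> FC // K \<Longrightarrow> (SOME A. A \<in> Q) \<in> Q \<and> (SOME A. A \<in> Q) \<in> FC"
  using q_some[OF equiv_K] fq_mem by blast
lemma fq_class: "A \<in> FC \<Longrightarrow> fq (K``{A}) = Phi A"
  using fq_mem[of "K``{A}" A] equiv_class_self[OF equiv_K] quotientI by metis

lemma iso_Q: "drc_iso QF MD fq"
  unfolding drc_iso_def Q_simps(1) MD_simps
proof (intro conjI ballI)
  show "bij_betw fq (FC // K) CM"
  proof (rule bij_betw_imageI)
    show "inj_on fq (FC // K)"
    proof (rule inj_onI)
      fix X Y assume X: "X \<in> FC // K" and Y: "Y \<in> FC // K" and e: "fq X = fq Y"
      obtain A where A: "A \<in> X" using Q_some[OF X] by blast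
      obtain B where B: "B \<in> Y" using Q_some[OF Y] by blast
      have "(A,B) \<in> K" using fq_mem[OF X A] fq_mem[OF Y B] e unfolding K_def by auto
      then have "K``{A} = K``{B}" using equiv_class_eq[OF equiv_K] by blast
      then show "X = Y" using q_mem[OF equiv_K X A] q_mem[OF equiv_K Y B] by simp
    qed
    show "fq ` (FC // K) = CM"
    proof
      show "fq ` (FC // K) \<subseteq> CM"
      proof
        fix c assume "c \<in> fq ` (FC // K)"
        then obtain X where X: "X \<in> FC // K" "c = fq X" by blast
        obtain A where A: "A \<in> X" using Q_some[OF X(1)] by blast
        show "c \<in> CM" using fq_mem[OF X(1) A] Phi_CM X(2) by simp
      qed
      show "CM \<subseteq> fq ` (FC // K)"
      proof
        fix c assume c: "c \<in> CM"
        obtain w where w: "w \<in> lists P" "w \<noteq> []" "c = hp w" using CM_hp[OF c] by blast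
        have A: "FR``{w} \<in> FC" using class_in w by simp
        have e: "c = fq (K``{FR``{w}})" using fq_class[OF A] Phi_class[OF w(1,2)] w(3) by simp
        have q: "K``{FR``{w}} \<in> FC // K" by (rule quotientI[OF A])
        show "c \<in> fq ` (FC // K)" using e q by blast
      qed
    qed
  qed
  fix X assume X: "X \<in> FC // K"
  define A where "A = (SOME a. a \<in> X)"
  have A: "A \<in> FC" "fq X = Phi A" using Q_some[OF X] fq_mem[OF X] unfolding A_def by auto
  show "fq (drc_D QF X) = drc_D MD (fq X)"
    unfolding Q_simps A_def[symmetric] using fq_class[of "drc_D FD A"] D_FC[OF A(1)] A(2) by simp
  show "fq (drc_R QF X) = drc_R MD (fq X)"
    unfolding Q_simps A_def[symmetric] using fq_class[of "drc_R FD A"] R_FC[OF A(1)] A(2) by simp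
  fix Y assume Y: "Y \<in> FC // K"
  define B where "B = (SOME a. a \<in> Y)"
  have B: "B \<in> FC" "fq Y = Phi B" using Q_some[OF Y] fq_mem[OF Y] unfolding B_def by auto
  show "fq (drc_mult QF X Y) = MM (fq X) (fq Y)"
    unfolding Q_simps A_def[symmetric] B_def[symmetric] using fq_class[of "drc_mult FD A B"] mult_FC[OF A(1) B(1)] A(2) B(2) by simp
qed

lemma iso_MQ: "\<exists>f. drc_iso MD (quot FD (mu FD)) f"
proof -
  have "drc_iso MD QF (inv_into (drc_carrier QF) fq)"
  proof (rule iso_inv[OF iso_Q])
    fix a b assume a: "a \<in> drc_carrier QF" and b: "b \<in> drc_carrier QF"
    have a': "(SOME x. x \<in> a) \<in> FC" and b': "(SOME x. x \<in> b) \<in> FC" using Q_some a b unfolding Q_simps by blast+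
    show "drc_mult QF a b \<in> drc_carrier QF" unfolding Q_simps
      by (rule quotientI) (use mult_FC[OF a' b'] in blast)
  next
    fix a assume a: "a \<in> drc_carrier QF"
    have a': "(SOME x. x \<in> a) \<in> FC" using Q_some a unfolding Q_simps by blast
    show "drc_D QF a \<in> drc_carrier QF" unfolding Q_simps
      by (rule quotientI) (use D_FC[OF a'] in blast)
    show "drc_R QF a \<in> drc_carrier QF" unfolding Q_simps
      by (rule quotientI) (use R_FC[OF a'] in blast)
  qed
  then show ?thesis unfolding mu_FD by blast
qed

end

locale drcs =
  fixes S :: "'b drc"
  assumes drcS: "drc S"
begin
abbreviation "C \<equiv> drc_carrier S"
abbreviation "m \<equiv> drc_mult S"
abbreviation "D \<equiv> drc_D S"
abbreviation "R \<equiv> drc_R S"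

lemma mC: "a \<in> C \<Longrightarrow> b \<in> C \<Longrightarrow> m a b \<in> C" using drcS unfolding drc_def Let_def by blast
lemma DC: "a \<in> C \<Longrightarrow> D a \<in> C" using drcS unfolding drc_def Let_def by blast
lemma RC: "a \<in> C \<Longrightarrow> R a \<in> C" using drcS unfolding drc_def Let_def by blast
lemma assoc: "a \<in> C \<Longrightarrow> b \<in> C \<Longrightarrow> c \<in> C \<Longrightarrow> m (m a b) c = m a (m b c)" using drcS unfolding drc_def Let_def by blast
lemma Da: "a \<in> C \<Longrightarrow> m (D a) a = a" using drcS unfolding drc_def Let_def by blast
lemma aR: "a \<in> C \<Longrightarrow> m a (R a) = a" using drcS unfolding drc_def Let_def by blast
lemma RD: "a \<in> C \<Longrightarrow> R (D a) = D a" using drcS unfolding drc_def Let_def by blast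
lemma DR: "a \<in> C \<Longrightarrow> D (R a) = R a" using drcS unfolding drc_def Let_def by blast
lemma D1: "a \<in> C \<Longrightarrow> b \<in> C \<Longrightarrow> D (m a b) = D (m a (D b))" using drcS unfolding drc_def Let_def by blast
lemma R1: "a \<in> C \<Longrightarrow> b \<in> C \<Longrightarrow> R (m a b) = R (m (R a) b)" using drcS unfolding drc_def Let_def by blast
lemma D2: "a \<in> C \<Longrightarrow> b \<in> C \<Longrightarrow> D (m a b) = m (m (D a) (D (m a b))) (D a)" using drcS unfolding drc_def Let_def by blast
lemma R2: "a \<in> C \<Longrightarrow> b \<in> C \<Longrightarrow> R (m a b) = m (m (R b) (R (m a b))) (R b)" using drcS unfolding drc_def Let_def by blast

lemma projs_C: "p \<in> projs S \<Longrightarrow> p \<in> C" unfolding projs_def using DC by auto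
lemma projs_D: "p \<in> projs S \<Longrightarrow> D p = p" unfolding projs_def using RD DR DC by fastforce
lemma projs_R: "p \<in> projs S \<Longrightarrow> R p = p" unfolding projs_def using RD by auto
lemma projs_idem: "p \<in> projs S \<Longrightarrow> m p p = p" using aR projs_C projs_R by metis
lemma R_projs: "a \<in> C \<Longrightarrow> R a \<in> projs S" unfolding projs_def using DR RC by (metis image_eqI)
lemma D_projs: "a \<in> C \<Longrightarrow> D a \<in> projs S" unfolding projs_def by simp

lemma rel_th: "p \<in> projs S \<Longrightarrow> q \<in> projs S \<Longrightarrow> m p q = m p (R (m p q))"
proof -
  assume p: "p \<in> projs S" and q: "q \<in> projs S"
  have pC: "p \<in> C" and qC: "q \<in> C" using p q projs_C by auto
  have pqC: "m p q \<in> C" using mC pC qC by simp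
  have rC: "R (m p q) \<in> C" using RC pqC by simp
  have "R (m p q) = m (m q (R (m p q))) q" using R2[OF pC qC] projs_R[OF q] by simp
  then have "m p (R (m p q)) = m p (m (m q (R (m p q))) q)" by simp
  also have "\<dots> = m (m (m p q) (R (m p q))) q" using assoc pC qC rC mC by simp
  also have "\<dots> = m (m p q) q" using aR[OF pqC] by simp
  also have "\<dots> = m p q" using assoc pC qC projs_idem[OF q] by simp
  finally show ?thesis by simp
qed
lemma rel_de: "p \<in> projs S \<Longrightarrow> q \<in> projs S \<Longrightarrow> m p q = m (D (m p q)) q"
proof -
  assume p: "p \<in> projs S" and q: "q \<in> projs S"
  have pC: "p \<in> C" and qC: "q \<in> C" using p q projs_C by auto
  have pqC: "m p q \<in> C" using mC pC qC by simp
  have dC: "D (m p q) \<in> C" using DC pqC by simp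
  have "D (m p q) = m (m p (D (m p q))) p" using D2[OF pC qC] projs_D[OF p] by simp
  then have "m (D (m p q)) q = m (m (m p (D (m p q))) p) q" by simp
  also have "\<dots> = m p (m (D (m p q)) (m p q))" using assoc pC qC dC mC by simp
  also have "\<dots> = m p (m p q)" using Da[OF pqC] by simp
  also have "\<dots> = m p q" using assoc pC qC projs_idem[OF p] by (metis)
  finally show ?thesis by simp
qed

end

locale uq = pa P th de + drcs S for P :: "'p set" and th de and S :: "'b drc" +
  fixes g :: "'p \<Rightarrow> 'b"
  assumes pg: "proj_generated S" and fund: "fundamental S"
    and giso: "proj_alg_iso P th de (projs S) (thS S) (deS S) g"
begin

abbreviation "PS \<equiv> projs S"
abbreviation "gi \<equiv> inv_into P g"

lemma g_bij: "bij_betw g P PS" using giso unfolding proj_alg_iso_def by blast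
lemma gP: "p \<in> P \<Longrightarrow> g p \<in> PS" using g_bij bij_betwE by blast
lemma giP: "r \<in> PS \<Longrightarrow> gi r \<in> P \<and> g (gi r) = r"
  using g_bij by (metis bij_betw_imp_surj_on f_inv_into_f inv_into_into)
lemma gig: "p \<in> P \<Longrightarrow> gi (g p) = p" using g_bij bij_betw_imp_inj_on inv_into_f_f by metis
lemma g_th: "p \<in> P \<Longrightarrow> q \<in> P \<Longrightarrow> g (th p q) = R (m (g q) (g p))"
  using giso unfolding proj_alg_iso_def thS_def by blast
lemma g_de: "p \<in> P \<Longrightarrow> q \<in> P \<Longrightarrow> g (de p q) = D (m (g p) (g q))"
  using giso unfolding proj_alg_iso_def deS_def by blast
lemma gC: "p \<in> P \<Longrightarrow> g p \<in> C" using gP projs_C by blast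

fun sp :: "'p list \<Rightarrow> 'b" where
  "sp [] = undefined"
| "sp [p] = g p"
| "sp (p#q#w) = m (g p) (sp (q#w))"

lemma sp_Cons: "w \<noteq> [] \<Longrightarrow> sp (a#w) = m (g a) (sp w)" by (cases w) auto
lemma sp_C: "w \<in> lists P \<Longrightarrow> w \<noteq> [] \<Longrightarrow> sp w \<in> C"
proof (induction w)
  case Nil then show ?case by simp
next
  case (Cons a w) then show ?case by (cases "w = []") (auto simp: sp_Cons gC mC)
qed
lemma sp_append: "u \<in> lists P \<Longrightarrow> u \<noteq> [] \<Longrightarrow> v \<in> lists P \<Longrightarrow> v \<noteq> [] \<Longrightarrow> sp (u@v) = m (sp u) (sp v)"
proof (induction u)
  case Nil then show ?case by simp
next
  case (Cons a u)
  show ?case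
  proof (cases "u = []")
    case True then show ?thesis using Cons by (simp add: sp_Cons)
  next
    case False
    then have "sp ((a#u)@v) = m (g a) (m (sp u) (sp v))" using Cons by (simp add: sp_Cons)
    also have "\<dots> = m (m (g a) (sp u)) (sp v)" using assoc gC sp_C Cons False by simp
    finally show ?thesis using False by (simp add: sp_Cons)
  qed
qed
lemma sp_ctx: "sp u = sp v \<Longrightarrow> u \<in> lists P \<Longrightarrow> u \<noteq> [] \<Longrightarrow> v \<in> lists P \<Longrightarrow> v \<noteq> [] \<Longrightarrow>
   x \<in> lists P \<Longrightarrow> y \<in> lists P \<Longrightarrow> sp (x@u@y) = sp (x@v@y)"
proof -
  assume a: "sp u = sp v" "u \<in> lists P" "u \<noteq> []" "v \<in> lists P" "v \<noteq> []" "x \<in> lists P" "y \<in> lists P"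
  have 1: "sp (u@y) = sp (v@y)"
    using a by (cases "y = []") (auto simp: sp_append)
  show ?thesis using a 1 by (cases "x = []") (auto simp: sp_append)
qed
lemma frel_sp: "(u,v) \<in> FR \<Longrightarrow> sp u = sp v"
proof (induction rule: frel.induct)
  case (frel_idem p) then show ?case using projs_idem gP by simp
next
  case (frel_th p q) then show ?case using rel_th[OF gP gP] g_th by simp
next
  case (frel_de p q) then show ?case using rel_de[OF gP gP] g_de by simp
next
  case (frel_ctx u v x y) then show ?case using sp_ctx frel_lists by blast
qed auto

lemma C_sp: "a \<in> C \<Longrightarrow> \<exists>w. w \<in> lists P \<and> w \<noteq> [] \<and> a = sp w"
proof -
  assume "a \<in> C"
  then have "a \<in> sgen m PS" using pg unfolding proj_generated_def by simp
  then show ?thesis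
  proof (induction rule: sgen.induct)
    case (sgen_base x) then show ?case using giP by (intro exI[of _ "[gi x]"]) auto
  next
    case (sgen_mult a b)
    then obtain u v where "u \<in> lists P" "u \<noteq> []" "a = sp u" "v \<in> lists P" "v \<noteq> []" "b = sp v" by auto
    then show ?case by (intro exI[of _ "u@v"]) (auto simp: sp_append)
  qed
qed
lemma C_chain: "a \<in> C \<Longrightarrow> \<exists>w. fch w \<and> a = sp w"
  using C_sp normalize frel_sp by metis

lemma sp_D: "fch w \<Longrightarrow> D (sp w) = g (hd w)"
proof (induction w rule: induct_list012)
  case 1 then show ?case by (simp add: fchain_def)
next
  case (2 p) then show ?case using projs_D gP by simp
next
  case (3 a b w')
  have F: "fF th de a b" and ch: "fch (b#w')" and aP: "a \<in> P" using "3.prems" by auto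
  have bP: "b \<in> P" and w'P: "w' \<in> lists P" using fch_P[OF ch] by auto
  have sC: "sp (b#w') \<in> C" using sp_C fch_P[OF ch] by blast
  have "D (sp (a#b#w')) = D (m (g a) (D (sp (b#w'))))" using D1[OF gC[OF aP] sC] by simp
  also have "\<dots> = D (m (g a) (g b))" using "3.IH"(2)[OF ch] by simp
  also have "\<dots> = g (de a b)" using g_de aP bP by simp
  also have "\<dots> = g a" using F unfolding fF_def by metis
  finally show ?case by simp
qed
lemma sp_R: "fch w \<Longrightarrow> R (sp w) = g (last w)"
proof (induction w rule: induct_list012)
  case 1 then show ?case by (simp add: fchain_def)
next
  case (2 p) then show ?case using projs_R gP by simp
next
  case (3 a b w')
  have F: "fF th de a b" and ch: "fch (b#w')" and aP: "a \<in> P" using "3.prems" by auto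
  have bP: "b \<in> P" and w'P: "w' \<in> lists P" using fch_P[OF ch] by auto
  define x where "x = sp (b#w')"
  have xC: "x \<in> C" using sp_C fch_P[OF ch] unfolding x_def by blast
  have xx: "m (g b) x = x" unfolding x_def using frel_sp[OF frel_R[OF fr_idem[OF bP] w'P]] sp_Cons by simp
  have gaC: "g a \<in> C" and gbC: "g b \<in> C" using gC aP bP by auto
  have "R (sp (a#b#w')) = R (m (g a) (m (g b) x))" using xx unfolding x_def by simp
  also have "\<dots> = R (m (m (g a) (g b)) x)" using assoc gaC gbC xC by simp
  also have "\<dots> = R (m (R (m (g a) (g b))) x)" using R1 mC gaC gbC xC by simp
  also have "\<dots> = R (m (g (th b a)) x)" using g_th aP bP by simp
  also have "\<dots> = R (m (g b) x)" using F unfolding fF_def by metis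
  also have "\<dots> = g (last (b#w'))" using xx "3.IH"(2)[OF ch] unfolding x_def by simp
  finally show ?case by simp
qed

definition rho :: "'b \<Rightarrow> ('p \<Rightarrow> 'p) \<times> ('p \<Rightarrow> 'p)" where
  "rho a = ((\<lambda>x\<in>P. gi (R (m (g x) a))), (\<lambda>x\<in>P. gi (D (m a (g x)))))"

lemma rho_eq: "(\<And>x. x \<in> P \<Longrightarrow> R (m (g x) a) = R (m (g x) b)) \<Longrightarrow> (\<And>x. x \<in> P \<Longrightarrow> D (m a (g x)) = D (m b (g x))) \<Longrightarrow> rho a = rho b"
  unfolding rho_def by (auto intro!: restrict_ext)

lemma rho_mult: "a \<in> C \<Longrightarrow> b \<in> C \<Longrightarrow> rho (m a b) = MM (rho a) (rho b)"
proof -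
  assume a: "a \<in> C" and b: "b \<in> C"
  have f: "fst (MM (rho a) (rho b)) x = gi (R (m (g x) (m a b)))" if x: "x \<in> P" for x
  proof -
    have r: "R (m (g x) a) \<in> PS" using R_projs mC gC x a by simp
    have "fst (MM (rho a) (rho b)) x = gi (R (m (g (gi (R (m (g x) a)))) b))"
      using x giP[OF r] by (simp add: MM_fst rho_def)
    also have "\<dots> = gi (R (m (R (m (g x) a)) b))" using giP[OF r] by simp
    also have "\<dots> = gi (R (m (m (g x) a) b))" using R1 mC gC x a b by simp
    also have "\<dots> = gi (R (m (g x) (m a b)))" using assoc gC x a b by simp
    finally show ?thesis .
  qed
  have s: "snd (MM (rho a) (rho b)) x = gi (D (m (m a b) (g x)))" if x: "x \<in> P" for x
  proof -
    have r: "D (m b (g x)) \<in> PS" using D_projs mC gC x b by simp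
    have "snd (MM (rho a) (rho b)) x = gi (D (m a (g (gi (D (m b (g x)))))))"
      using x giP[OF r] by (simp add: MM_snd rho_def)
    also have "\<dots> = gi (D (m a (D (m b (g x)))))" using giP[OF r] by simp
    also have "\<dots> = gi (D (m a (m b (g x))))" using D1 mC gC x a b by simp
    also have "\<dots> = gi (D (m (m a b) (g x)))" using assoc gC x a b by simp
    finally show ?thesis .
  qed
  have e1: "fst (MM (rho a) (rho b)) \<in> extensional P" "snd (MM (rho a) (rho b)) \<in> extensional P"
    by (simp_all add: MM_fst MM_snd)
  show ?thesis
    by (rule prod_eqI; rule extensionalityI[where A=P])
       (use e1 f s in \<open>auto simp: rho_def\<close>)
qed

lemma rho_g: "p \<in> P \<Longrightarrow> rho (g p) = hat p"
  unfolding rho_def hatp_def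
  by (auto intro!: restrict_ext simp: g_th[symmetric] g_de[symmetric] gig cl)

lemma rho_sp: "w \<in> lists P \<Longrightarrow> w \<noteq> [] \<Longrightarrow> rho (sp w) = hp w"
proof (induction w)
  case Nil then show ?case by simp
next
  case (Cons a w) then show ?case
    by (cases "w = []") (auto simp: sp_Cons hp_Cons rho_g rho_mult gC sp_C)
qed

lemma rho_D: "a \<in> C \<Longrightarrow> rho (D a) = drc_D MD (rho a)"
proof -
  assume a: "a \<in> C"
  obtain w where w: "fch w" "a = sp w" using C_chain[OF a] by blast
  have wP: "w \<in> lists P" "w \<noteq> []" using fch_P[OF w(1)] by auto
  show ?thesis using sp_D[OF w(1)] w(2) rho_g hd_P[OF wP] D_hp[OF w(1)] rho_sp[OF wP] by simp
qed
lemma rho_R: "a \<in> C \<Longrightarrow> rho (R a) = drc_R MD (rho a)"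
proof -
  assume a: "a \<in> C"
  obtain w where w: "fch w" "a = sp w" using C_chain[OF a] by blast
  have wP: "w \<in> lists P" "w \<noteq> []" using fch_P[OF w(1)] by auto
  show ?thesis using sp_R[OF w(1)] w(2) rho_g last_P[OF wP] R_hp[OF w(1)] rho_sp[OF wP] by simp
qed
lemma rho_CM: "a \<in> C \<Longrightarrow> rho a \<in> CM"
  using C_sp rho_sp hp_CM by metis

definition KS where "KS = {(a,b). a \<in> C \<and> b \<in> C \<and> rho a = rho b}"

lemma mu_KS: "mu S = KS"
proof (rule mu_unique)
  show "drc_cong S KS" unfolding drc_cong_def
  proof (intro conjI)
    show "equiv C KS" by (rule equivI) (auto simp: KS_def refl_on_def sym_def trans_def)
    show "\<forall>(a, b)\<in>KS. \<forall>c\<in>C. (m a c, m b c) \<in> KS \<and> (m c a, m c b) \<in> KS"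
      unfolding KS_def using rho_mult mC by auto
    show "\<forall>(a, b)\<in>KS. (D a, D b) \<in> KS \<and> (R a, R b) \<in> KS"
      unfolding KS_def using rho_D rho_R DC RC by auto
  qed
  show "proj_separating S KS" unfolding proj_separating_def
  proof (intro ballI impI)
    fix p q assume p: "p \<in> PS" and q: "q \<in> PS" and pq: "(p,q) \<in> KS"
    have "rho p = rho q" using pq unfolding KS_def by simp
    then have "rho (g (gi p)) = rho (g (gi q))" using giP[OF p] giP[OF q] by simp
    then have "hat (gi p) = hat (gi q)" using giP[OF p] giP[OF q] rho_g by metis
    then have "gi p = gi q" using hat_inj giP p q unfolding inj_on_def by blast
    then show "p = q" using giP p q by metis
  qed
  fix \<tau> assume c: "drc_cong S \<tau>" and s: "proj_separating S \<tau>"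
  show "\<tau> \<subseteq> KS"
  proof
    fix z assume z: "z \<in> \<tau>"
    obtain a b where ab: "z = (a,b)" by (cases z)
    have aC: "a \<in> C" and bC: "b \<in> C" using cong_sub[OF c] z ab by auto
    have "rho a = rho b"
    proof (rule rho_eq)
      fix x assume x: "x \<in> P"
      have "(m (g x) a, m (g x) b) \<in> \<tau>" using c z ab gC[OF x] unfolding drc_cong_def by fastforce
      then have "(R (m (g x) a), R (m (g x) b)) \<in> \<tau>" using c unfolding drc_cong_def by fastforce
      then show "R (m (g x) a) = R (m (g x) b)" using s R_projs mC gC x aC bC unfolding proj_separating_def by blast
      have "(m a (g x), m b (g x)) \<in> \<tau>" using c z ab gC[OF x] unfolding drc_cong_def by fastforce
      then have "(D (m a (g x)), D (m b (g x))) \<in> \<tau>" using c unfolding drc_cong_def by fastforce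
      then show "D (m a (g x)) = D (m b (g x))" using s D_projs mC gC x aC bC unfolding proj_separating_def by blast
    qed
    then show "z \<in> KS" using ab aC bC unfolding KS_def by simp
  qed
qed

lemma iso_S: "drc_iso S MD rho"
  unfolding drc_iso_def MD_simps
proof (intro conjI ballI)
  show "bij_betw rho C CM"
  proof (rule bij_betw_imageI)
    show "inj_on rho C"
    proof (rule inj_onI)
      fix a b assume "a \<in> C" "b \<in> C" "rho a = rho b"
      then have "(a,b) \<in> mu S" unfolding mu_KS KS_def by simp
      then show "a = b" using fund unfolding fundamental_def by (simp add: Id_on_iff)
    qed
    show "rho ` C = CM"
    proof
      show "rho ` C \<subseteq> CM" using rho_CM by blast
      show "CM \<subseteq> rho ` C"
      proof
        fix c assume c: "c \<in> CM"
        obtain w where w: "w \<in> lists P" "w \<noteq> []" "c = hp w" using CM_hp[OF c] by blast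
        have "c = rho (sp w)" using rho_sp w by simp
        moreover have "sp w \<in> C" using sp_C w by simp
        ultimately show "c \<in> rho ` C" by blast
      qed
    qed
  qed
  fix a assume a: "a \<in> C"
  show "rho (D a) = drc_D MD (rho a)" using rho_D[OF a] .
  show "rho (R a) = drc_R MD (rho a)" using rho_R[OF a] .
  fix b assume b: "b \<in> C"
  show "rho (m a b) = MM (rho a) (rho b)" using rho_mult[OF a b] .
qed

end

theorem theorem8p19:
  fixes P :: "'p set" and th de :: "'p \<Rightarrow> 'p \<Rightarrow> 'p"
  assumes "proj_alg P th de"
  shows "drc (Mdrc P th de) \<and> proj_generated (Mdrc P th de) \<and> fundamental (Mdrc P th de) \<and>
    (\<exists>g. proj_alg_iso P th de (projs (Mdrc P th de)) (thS (Mdrc P th de)) (deS (Mdrc P th de)) g) \<and>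
    (\<exists>f. drc_iso (Mdrc P th de) (quot (Fdrc P th de) (mu (Fdrc P th de))) f) \<and>
    (\<forall>S :: 'b drc. drc S \<and> proj_generated S \<and> fundamental S \<and>
        (\<exists>g. proj_alg_iso P th de (projs S) (thS S) (deS S) g)
        \<longrightarrow> (\<exists>f. drc_iso S (Mdrc P th de) f))"
proof -
  interpret pa P th de using assms by unfold_locales
  have U: "\<exists>f. drc_iso S (Mdrc P th de) f"
    if h: "drc S \<and> proj_generated S \<and> fundamental S \<and> (\<exists>g. proj_alg_iso P th de (projs S) (thS S) (deS S) g)"
    for S :: "'b drc"
  proof -
    obtain g where g: "proj_alg_iso P th de (projs S) (thS S) (deS S) g" using h by blast
    interpret u: uq P th de S g
      by unfold_locales (use assms h g in auto)
    show ?thesis using u.iso_S by blast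
  qed
  show ?thesis using drc_MD proj_generated_MD fundamental_MD iso_P iso_MQ U by blast
qed

end
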